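(* Consider, for $x\ge0$, the planar piecewise-smooth (Filippov) system $$\dot x=1,\qquad \dot y=-ay-\big[1+(1+\lambda)\cos\pi x\big]\sin\tfrac{\pi x}{2},$$ with $\lambda=\operatorname{sign}(y)$ for $y\ne0$ and $\lambda\in(-1,1)$ on $y=0$. There exists $a_h>0$, $a_h\gg1$, such that for all $a\in(a_h,+\infty)$ the system has a sliding $4$-periodic solution. Moreover, for every $a\in(a_h,+\infty)$ there exists $\nu(a)>0$ such that the solutions $y(x,x_i)$ of the system with $x_i\in(\frac83,\frac{10}{3})\cup(\frac{10}{3},\frac{10}{3}+\nu(a))$ converge in finite time to the periodic solution $y(x,\frac{10}{3})$ (i.e. coincide with it for all sufficiently large $x$).
   Context: $y(x,x_i)$ denotes the solution with $y(x_i)=0$. For $y>0$ the system is $\dot y=-ay-\sin(3\pi x/2)$ and for $y<0$ it is $\dot y=-ay-\sin(\pi x/2)$. The sliding manifold is $\Lambda^L=\{(x,0): x\in(\frac23+2n,\frac43+2n),\ n\in\mathbb{N}\}$; on the intervals $(\frac83+4n,\frac{10}{3}+4n)$ both vector fields point towards $y=0$ (attracting sliding: solutions reaching $y=0$ there remain on it with $\dot x=1$ until the right endpoint, where they leave into $y>0$), on $(\frac23+4n,\frac43+4n)$ both point away (repelling), and elsewhere on $y=0$ solutions cross transversally (Filippov convention). A periodic solution is sliding if part of it lies on $\Lambda^L$. *)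

theory Defs
  imports "HOL-Analysis.Analysis"
begin

definition filippov_rhs :: "real \<Rightarrow> real \<Rightarrow> real \<Rightarrow> real set" where
  "filippov_rhs a x y =
     {- a * y - (1 + (1 + l) * cos (pi * x)) * sin (pi * x / 2) | l.
        (y > 0 \<and> l = 1) \<or> (y < 0 \<and> l = -1) \<or> (y = 0 \<and> -1 < l \<and> l < 1)}"

text \<open>A (forward) Filippov solution on [x0, \<infinity>): y is the indefinite integral of a
  locally Lebesgue integrable selection g of the right-hand side, i.e. y is locally
  absolutely continuous with y' \<in> F(x, y(x)) almost everywhere.\<close>
definition filippov_sol :: "real \<Rightarrow> (real \<Rightarrow> real) \<Rightarrow> real \<Rightarrow> bool" where
  "filippov_sol a y x0 \<longleftrightarrow>
     (\<exists>g :: real \<Rightarrow> real.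
        (\<forall>x\<ge>x0. g x \<in> filippov_rhs a x (y x)) \<and>
        (\<forall>x\<ge>x0. g absolutely_integrable_on {x0..x} \<and>
                   (g has_integral (y x - y x0)) {x0..x}))"

definition LambdaL :: "real set" where
  "LambdaL = {x. \<exists>n::nat. 2/3 + 2 * real n < x \<and> x < 4/3 + 2 * real n}"

definition sliding :: "(real \<Rightarrow> real) \<Rightarrow> bool" where
  "sliding p \<longleftrightarrow> (\<exists>x1 x2. 0 \<le> x1 \<and> x1 < x2 \<and> (\<forall>x\<in>{x1..x2}. x \<in> LambdaL \<and> p x = 0))"

end

theory Submission
  imports Defs
begin


definition fp :: "real \<Rightarrow> real" where "fp x = - sin (3 * pi * x / 2)"
definition fm :: "real \<Rightarrow> real" where "fm x = - sin (pi * x / 2)"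

lemma sin3_aux: "(1 + 2 * cos (2*t)) * sin t = sin (2*t + (t::real))"
proof -
  have "sin (2*t + t) = sin (2*t) * cos t + cos (2*t) * sin t" by (rule sin_add)
  also have "\<dots> = (1 + 2 * cos (2*t)) * sin t"
  proof -
    have a: "sin (2*t) = 2 * sin t * cos t" by (rule sin_double)
    have b: "cos (2*t) = 2 * (cos t)^2 - 1" by (rule cos_double_cos)
    show ?thesis unfolding a b by (simp add: algebra_simps power2_eq_square)
  qed
  finally show ?thesis by simp
qed

lemma sin3_id: "(1 + 2 * cos (pi * x)) * sin (pi * x / 2) = sin (3 * pi * x / 2)"
proof -
  have 2: "2 * (pi * x / 2) + pi * x / 2 = 3 * pi * x / 2" by simp
  have 1: "2 * (pi * x / 2) = pi * x" by simp
  have "(1 + 2 * cos (2 * (pi * x / 2))) * sin (pi * x / 2) = sin (3 * pi * x / 2)"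
    using sin3_aux[of "pi * x / 2"] unfolding 2 .
  then show ?thesis unfolding 1 .
qed

lemma sel_props:
  assumes "g \<in> filippov_rhs a x y"
  shows "(y > 0 \<longrightarrow> g = fp x - a * y) \<and> (y < 0 \<longrightarrow> g = fm x - a * y) \<and>
         min (fp x) (fm x) - a * y \<le> g \<and> g \<le> max (fp x) (fm x) - a * y"
proof -
  obtain l where g: "g = - a * y - (1 + (1 + l) * cos (pi * x)) * sin (pi * x / 2)"
    and l: "(y > 0 \<and> l = 1) \<or> (y < 0 \<and> l = -1) \<or> (y = 0 \<and> -1 < l \<and> l < 1)"
    using assms unfolding filippov_rhs_def by blast
  have e: "g = ((1 - l)/2) * fm x + ((1 + l)/2) * fp x - a * y"
    unfolding g fp_def fm_def sin3_id[symmetric] by (simp add: algebra_simps divide_simps)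
  have c: "((1 - l)/2) * fm x + ((1 + l)/2) * fp x \<ge> min (fp x) (fm x) \<and>
           ((1 - l)/2) * fm x + ((1 + l)/2) * fp x \<le> max (fp x) (fm x)" if "-1 \<le> l" "l \<le> 1"
  proof -
    have e1: "((1 - l)/2) * min (fp x) (fm x) + ((1 + l)/2) * min (fp x) (fm x) = min (fp x) (fm x)"
      by (simp add: field_simps)
    have e2: "((1 - l)/2) * max (fp x) (fm x) + ((1 + l)/2) * max (fp x) (fm x) = max (fp x) (fm x)"
      by (simp add: field_simps)
    have "((1 - l)/2) * fm x + ((1 + l)/2) * fp x \<ge> ((1 - l)/2) * min (fp x) (fm x) + ((1 + l)/2) * min (fp x) (fm x)"
      by (intro add_mono mult_left_mono) (use that in auto)
    moreover have "((1 - l)/2) * fm x + ((1 + l)/2) * fp x \<le> ((1 - l)/2) * max (fp x) (fm x) + ((1 + l)/2) * max (fp x) (fm x)"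
      by (intro add_mono mult_left_mono) (use that in auto)
    ultimately show ?thesis unfolding e1 e2 by simp
  qed
  have lr: "-1 \<le> l" "l \<le> 1" using l by auto
  show ?thesis using e c[OF lr] l by auto
qed

lemma sel_pos: "y > 0 \<Longrightarrow> fp x - a * y \<in> filippov_rhs a x y"
  unfolding filippov_rhs_def fp_def sin3_id[symmetric]
  by (rule CollectI, rule exI[of _ 1]) (simp add: algebra_simps)

lemma sel_neg: "y < 0 \<Longrightarrow> fm x - a * y \<in> filippov_rhs a x y"
  unfolding filippov_rhs_def fm_def
  by (rule CollectI, rule exI[of _ "-1"]) (simp add: algebra_simps)

lemma sel_zero: "(fp x + fm x) / 2 \<in> filippov_rhs a x 0"
proof -
  have "(fp x + fm x) / 2 = - a * 0 - (1 + (1 + 0) * cos (pi * x)) * sin (pi * x / 2)"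
    unfolding fp_def fm_def sin3_id[symmetric] by (simp add: field_simps)
  then show ?thesis unfolding filippov_rhs_def by force
qed

lemma sel_slide: assumes "cos (pi * x) < -1/2" shows "0 \<in> filippov_rhs a x 0"
proof -
  have c: "cos (pi * x) < 0" using assms by simp
  define l where "l = -1 - 1 / cos (pi * x)"
  have "-1 < l" unfolding l_def using c by (simp add: divide_simps)
  moreover have "l < 1" unfolding l_def using assms c by (simp add: divide_simps)
  moreover have "1 + (1 + l) * cos (pi * x) = 0" unfolding l_def using c by (simp add: field_simps)
  ultimately show ?thesis unfolding filippov_rhs_def
    by (intro CollectI exI[of _ l]) simp
qed

lemma sel_bound: assumes "g \<in> filippov_rhs a x y" shows "\<bar>g\<bar> \<le> \<bar>a\<bar> * \<bar>y\<bar> + 3"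
proof -
  obtain l where g: "g = - a * y - (1 + (1 + l) * cos (pi * x)) * sin (pi * x / 2)"
    and l: "-1 \<le> l" "l \<le> 1"
    using assms unfolding filippov_rhs_def by force
  have "\<bar>(1 + (1 + l) * cos (pi * x))\<bar> \<le> 3"
  proof -
    have "\<bar>(1 + l) * cos (pi * x)\<bar> \<le> 2 * 1"
      unfolding abs_mult by (intro mult_mono) (use l in auto)
    then show ?thesis by linarith
  qed
  then have "\<bar>(1 + (1 + l) * cos (pi * x)) * sin (pi * x / 2)\<bar> \<le> 3 * 1"
    unfolding abs_mult by (intro mult_mono) auto
  then have h: "\<bar>(1 + (1 + l) * cos (pi * x)) * sin (pi * x / 2)\<bar> \<le> 3" by simp
  show ?thesis unfolding g using h abs_mult[of a y] by linarith
qed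



lemma pi_mul_le: "r \<le> s \<Longrightarrow> pi * r \<le> pi * (s::real)"
  by (simp add: mult_left_mono)
lemma pi_mul_less: "r < s \<Longrightarrow> pi * r < pi * (s::real)"
  by simp

lemma sin_pr_nonneg: "0 \<le> r \<Longrightarrow> r \<le> 1 \<Longrightarrow> sin (pi * r) \<ge> 0"
  by (rule sin_ge_zero) (use pi_mul_le[of r 1] in auto)
lemma sin_pr_pos: "0 < r \<Longrightarrow> r < 1 \<Longrightarrow> sin (pi * r) > 0"
  by (rule sin_gt_zero) (use pi_mul_less[of r 1] in auto)

lemma sin_pr_half_aux: "1/6 \<le> r \<Longrightarrow> r \<le> 1/2 \<Longrightarrow> sin (pi * r) \<ge> 1/2"
proof -
  assume r: "1/6 \<le> r" "r \<le> 1/2"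
  have "sin (pi / 6) \<le> sin (pi * r)"
    by (rule sin_monotone_2pi_le) (use pi_mul_le[OF r(1)] pi_mul_le[OF r(2)] pi_gt_zero in auto)
  then show ?thesis by (simp add: sin_30)
qed

lemma sin_pr_half: "1/6 \<le> r \<Longrightarrow> r \<le> 5/6 \<Longrightarrow> sin (pi * r) \<ge> 1/2"
proof -
  assume r: "1/6 \<le> r" "r \<le> 5/6"
  show ?thesis
  proof (cases "r \<le> 1/2")
    case True then show ?thesis using r sin_pr_half_aux by auto
  next
    case False
    have "sin (pi * r) = sin (pi - pi * r)" by simp
    also have "\<dots> = sin (pi * (1 - r))" by (simp add: algebra_simps)
    also have "\<dots> \<ge> 1/2" by (rule sin_pr_half_aux) (use r False in auto)
    finally show ?thesis .
  qed
qed

lemma cos_pr_lt: assumes "2/3 < r" "r < 4/3" shows "cos (pi * r) < - 1/2"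
proof -
  define s where "s = \<bar>r - 1\<bar>"
  have s: "0 \<le> s" "s < 1/3" unfolding s_def using assms by arith+
  have "cos (pi * (r - 1)) = cos (pi * s)"
    by (cases "r \<ge> 1") (auto simp: s_def algebra_simps abs_if)
  moreover have "cos (pi / 3) < cos (pi * s)"
    by (subst cos_mono_less_eq) (use pi_mul_less[OF s(2)] pi_mul_le[OF s(1)] pi_mul_le[of s 1] s in auto)
  moreover have "cos (pi * r) = - cos (pi * (r - 1))"
  proof -
    have "pi * r = pi * (r - 1) + pi" by (simp add: algebra_simps)
    then show ?thesis by simp
  qed
  ultimately show ?thesis by (simp add: cos_60)
qed

lemma R4: "fp x = - sin (pi * (3 * (x - 4) / 2))" "fm x = - sin (pi * ((x - 4) / 2))"
proof -
  have "3 * pi * x / 2 = pi * (3 * (x - 4) / 2) + 2*pi + 2*pi + 2*pi" by (simp add: field_simps)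
  then show "fp x = - sin (pi * (3 * (x - 4) / 2))" unfolding fp_def by (simp only: sin_periodic)
  have "pi * x / 2 = pi * ((x - 4) / 2) + 2*pi" by (simp add: field_simps)
  then show "fm x = - sin (pi * ((x - 4) / 2))" unfolding fm_def by (simp only: sin_periodic)
qed

lemma R6: "fp x = sin (pi * (3 * (x - 6) / 2))" "fm x = sin (pi * ((x - 6) / 2))"
proof -
  have "3 * pi * x / 2 = pi * (3 * (x - 6) / 2) + pi + 2*pi + 2*pi + 2*pi + 2*pi" by (simp add: field_simps)
  then show "fp x = sin (pi * (3 * (x - 6) / 2))" unfolding fp_def by (simp only: sin_periodic sin_periodic_pi minus_minus)
  have "pi * x / 2 = pi * ((x - 6) / 2) + pi + 2*pi" by (simp add: field_simps)
  then show "fm x = sin (pi * ((x - 6) / 2))" unfolding fm_def by (simp only: sin_periodic sin_periodic_pi minus_minus)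
qed

lemma fp_per: "fp (x + 4) = fp x" and fm_per: "fm (x + 4) = fm x"
  using R4[of "x+4"] R4[of x] R6[of "x + 4"] R6[of x]
proof -
  have "3 * pi * (x + 4) / 2 = 3 * pi * x / 2 + 2*pi + 2*pi + 2*pi" by (simp add: field_simps)
  then show "fp (x + 4) = fp x" unfolding fp_def by (simp only: sin_periodic)
  have "pi * (x + 4) / 2 = pi * x / 2 + 2*pi" by (simp add: field_simps)
  then show "fm (x + 4) = fm x" unfolding fm_def by (simp only: sin_periodic)
qed

lemma fpm_per_nat: "fp (x + 4 * real n) = fp x \<and> fm (x + 4 * real n) = fm x"
proof (induction n)
  case (Suc n)
  have "x + 4 * real (Suc n) = (x + 4 * real n) + 4" by simp
  then show ?case by (simp only: fp_per fm_per Suc.IH)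
qed simp

lemma filippov_rhs_per: "filippov_rhs a (x + 4) y = filippov_rhs a x y"
proof -
  have c: "cos (pi * (x + 4)) = cos (pi * x)"
  proof -
    have "pi * (x + 4) = pi * x + 2*pi + 2*pi" by (simp add: algebra_simps)
    then show ?thesis by (simp only: cos_periodic)
  qed
  have s: "sin (pi * (x + 4) / 2) = sin (pi * x / 2)"
  proof -
    have "pi * (x + 4) / 2 = pi * x / 2 + 2*pi" by (simp add: algebra_simps)
    then show ?thesis by (simp only: sin_periodic)
  qed
  show ?thesis unfolding filippov_rhs_def c s ..
qed

lemma filippov_rhs_per_int: "filippov_rhs a (x + 4 * of_int k) y = filippov_rhs a x y"
proof -
  have n: "filippov_rhs a (x + 4 * real n) y = filippov_rhs a x y" for x n
  proof (induction n arbitrary: x)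
    case (Suc n)
    have "x + 4 * real (Suc n) = (x + 4 * real n) + 4" by simp
    then show ?case by (simp only: filippov_rhs_per Suc.IH)
  qed simp
  show ?thesis
  proof (cases "k \<ge> 0")
    case True
    define n where "n = nat k"
    have "of_int k = real n" unfolding n_def using True by simp
    then show ?thesis using n by simp
  next
    case False
    define n where "n = nat (- k)"
    have k: "of_int k = - real n" unfolding n_def using False by simp
    have "filippov_rhs a x y = filippov_rhs a ((x + 4 * of_int k) + 4 * real n) y"
      using k by simp
    then show ?thesis using n by simp
  qed
qed

lemma fp_bd: "\<bar>fp x\<bar> \<le> 1" and fm_bd: "\<bar>fm x\<bar> \<le> 1"
  unfolding fp_def fm_def by auto

lemma cont_fp: "continuous_on S fp" and cont_fm: "continuous_on S fm"
  unfolding fp_def[abs_def] fm_def[abs_def] by (auto intro!: continuous_intros)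

lemma isCont_fp: "isCont fp x" and isCont_fm: "isCont fm x"
  unfolding fp_def[abs_def] fm_def[abs_def] by (auto intro!: continuous_intros)

lemma Ta: "10/3 \<le> x \<Longrightarrow> x \<le> 4 \<Longrightarrow> fp x \<ge> 0 \<and> fm x \<ge> 0"
  unfolding R4 using sin_pr_nonneg[of "- (3 * (x - 4) / 2)"] sin_pr_nonneg[of "- ((x - 4) / 2)"]
  by (simp add: sin_minus[symmetric] del: sin_minus)
lemma Ta': "10/3 < x \<Longrightarrow> x < 4 \<Longrightarrow> fp x > 0 \<and> fm x > 0"
  unfolding R4 using sin_pr_pos[of "- (3 * (x - 4) / 2)"] sin_pr_pos[of "- ((x - 4) / 2)"]
  by (simp add: sin_minus[symmetric] del: sin_minus)
lemma Tb: "4 \<le> x \<Longrightarrow> x \<le> 14/3 \<Longrightarrow> fp x \<le> 0 \<and> fm x \<le> 0"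
  unfolding R4 using sin_pr_nonneg[of "3 * (x - 4) / 2"] sin_pr_nonneg[of "(x - 4) / 2"] by simp
lemma Tb': "4 < x \<Longrightarrow> x < 14/3 \<Longrightarrow> fp x < 0 \<and> fm x < 0"
  unfolding R4 using sin_pr_pos[of "3 * (x - 4) / 2"] sin_pr_pos[of "(x - 4) / 2"] by simp
lemma Tc: "13/3 \<le> x \<Longrightarrow> x \<le> 41/9 \<Longrightarrow> fp x \<le> -1/2 \<and> fm x \<le> -1/2"
  unfolding R4 using sin_pr_half[of "3 * (x - 4) / 2"] sin_pr_half[of "(x - 4) / 2"] by simp
lemma Td: "4 < x \<Longrightarrow> x < 6 \<Longrightarrow> fm x < 0"
  unfolding R4 using sin_pr_pos[of "(x - 4) / 2"] by simp
lemma Te: "19/3 \<le> x \<Longrightarrow> x \<le> 59/9 \<Longrightarrow> fm x \<ge> 1/2"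
  unfolding R6 using sin_pr_half[of "(x - 6) / 2"] by simp
lemma Tf: "6 \<le> x \<Longrightarrow> x \<le> 20/3 \<Longrightarrow> fp x \<ge> 0 \<and> fm x \<ge> 0"
  unfolding R6 using sin_pr_nonneg[of "3 * (x - 6) / 2"] sin_pr_nonneg[of "(x - 6) / 2"] by simp
lemma Tf': "6 < x \<Longrightarrow> x < 20/3 \<Longrightarrow> fp x > 0 \<and> fm x > 0"
  unfolding R6 using sin_pr_pos[of "3 * (x - 6) / 2"] sin_pr_pos[of "(x - 6) / 2"] by simp
lemma Tg: "61/9 \<le> x \<Longrightarrow> x \<le> 65/9 \<Longrightarrow> fp x \<le> -1/2"
proof -
  assume x: "61/9 \<le> x" "x \<le> 65/9"
  have "sin (pi * (3 * (x - 6) / 2)) = - sin (pi * (3 * (x - 6) / 2 - 1))"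
  proof -
    have e: "pi * (3 * (x - 6) / 2) = pi * (3 * (x - 6) / 2 - 1) + pi" by (simp add: algebra_simps)
    show ?thesis by (subst e) (rule sin_periodic_pi)
  qed
  moreover have "sin (pi * (3 * (x - 6) / 2 - 1)) \<ge> 1/2" by (rule sin_pr_half) (use x in auto)
  ultimately show ?thesis unfolding R6 by simp
qed
lemma Th: "20/3 \<le> x \<Longrightarrow> x \<le> 22/3 \<Longrightarrow> fp x \<le> 0 \<and> fm x \<ge> 0"
proof -
  assume x: "20/3 \<le> x" "x \<le> 22/3"
  have "sin (pi * (3 * (x - 6) / 2)) = - sin (pi * (3 * (x - 6) / 2 - 1))"
  proof -
    have e: "pi * (3 * (x - 6) / 2) = pi * (3 * (x - 6) / 2 - 1) + pi" by (simp add: algebra_simps)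
    show ?thesis by (subst e) (rule sin_periodic_pi)
  qed
  moreover have "sin (pi * (3 * (x - 6) / 2 - 1)) \<ge> 0" by (rule sin_pr_nonneg) (use x in auto)
  moreover have "sin (pi * ((x - 6) / 2)) \<ge> 0" by (rule sin_pr_nonneg) (use x in auto)
  ultimately show ?thesis unfolding R6 by simp
qed
lemma Th2: "8/3 \<le> x \<Longrightarrow> x \<le> 10/3 \<Longrightarrow> fp x \<le> 0 \<and> fm x \<ge> 0"
  using Th[of "x + 4"] fp_per[of x] fm_per[of x] by simp

lemma Ti: "20/3 < x \<Longrightarrow> x < 22/3 \<Longrightarrow> cos (pi * x) < -1/2"
proof -
  assume x: "20/3 < x" "x < 22/3"
  have "pi * x = pi * (x - 6) + 2*pi + 2*pi + 2*pi" by (simp add: algebra_simps)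
  then have "cos (pi * x) = cos (pi * (x - 6))" by (simp only: cos_periodic)
  then show ?thesis using cos_pr_lt[of "x - 6"] x by simp
qed
lemma Ti2: "8/3 < x \<Longrightarrow> x < 10/3 \<Longrightarrow> cos (pi * x) < -1/2"
proof -
  assume x: "8/3 < x" "x < 10/3"
  have "pi * x = pi * (x - 2) + 2*pi" by (simp add: algebra_simps)
  then have "cos (pi * x) = cos (pi * (x - 2))" by (simp only: cos_periodic)
  then show ?thesis using cos_pr_lt[of "x - 2"] x by simp
qed



definition isol :: "(real \<Rightarrow> real) \<Rightarrow> (real \<Rightarrow> real) \<Rightarrow> real \<Rightarrow> real \<Rightarrow> bool" where
  "isol y g u v \<longleftrightarrow> u \<le> v \<and> continuous_on {u..v} y \<and>
     (\<forall>s t. u \<le> s \<longrightarrow> s \<le> t \<longrightarrow> t \<le> v \<longrightarrow> (g has_integral (y t - y s)) {s..t})"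

lemma isol_sub: "isol y g u v \<Longrightarrow> u \<le> u' \<Longrightarrow> u' \<le> v' \<Longrightarrow> v' \<le> v \<Longrightarrow> isol y g u' v'"
  unfolding isol_def by (auto intro: continuous_on_subset)

lemma isol_neg: "isol y g u v \<Longrightarrow> isol (\<lambda>x. - y x) (\<lambda>x. - g x) u v"
  unfolding isol_def
proof (intro conjI allI impI; (elim conjE)?)
  fix s t assume h: "\<forall>s t. u \<le> s \<longrightarrow> s \<le> t \<longrightarrow> t \<le> v \<longrightarrow> (g has_integral y t - y s) {s..t}"
    and st: "u \<le> s" "s \<le> t" "t \<le> v"
  show "((\<lambda>x. - g x) has_integral - y t - - y s) {s..t}"
    using has_integral_neg[OF h[rule_format, OF st]] by simp
qed (auto intro!: continuous_intros)

lemma IC_le: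
  assumes "isol y g u v" "u \<le> s" "s \<le> t" "t \<le> v" "\<And>x. s < x \<Longrightarrow> x < t \<Longrightarrow> g x \<le> c"
  shows "y t - y s \<le> c * (t - s)"
proof -
  have gi: "(g has_integral (y t - y s)) {s..t}" using assms unfolding isol_def by auto
  have hi: "((\<lambda>x. if s < x \<and> x < t then g x else c) has_integral (y t - y s)) {s..t}"
    by (rule has_integral_spike_finite[OF _ _ gi, of "{s, t}"]) auto
  have ci: "((\<lambda>x. c) has_integral (c * (t - s))) {s..t}"
    using has_integral_const_real[of c s t] assms(3) by (simp add: mult.commute)
  show ?thesis by (rule has_integral_le[OF hi ci]) (use assms(5) in auto)
qed

lemma IC_ge:
  assumes "isol y g u v" "u \<le> s" "s \<le> t" "t \<le> v" "\<And>x. s < x \<Longrightarrow> x < t \<Longrightarrow> g x \<ge> c"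
  shows "y t - y s \<ge> c * (t - s)"
  using IC_le[OF isol_neg[OF assms(1)] assms(2-4), of "-c"] assms(5) by force

lemma S1:
  assumes iy: "isol y g u v" and yu: "y u \<le> b" and h: "\<And>x. x \<in> {u..v} \<Longrightarrow> y x > b \<Longrightarrow> g x \<le> 0"
  shows "\<forall>x\<in>{u..v}. y x \<le> b"
proof (rule ccontr)
  assume "\<not> (\<forall>x\<in>{u..v}. y x \<le> b)"
  then obtain x2 where x2: "x2 \<in> {u..v}" "y x2 > b" by force
  define S where "S = {x \<in> {u..x2}. y x \<le> b}"
  have cy: "continuous_on {u..x2} y"
    using iy x2 unfolding isol_def by (auto intro: continuous_on_subset)
  have "closed S" unfolding S_def
    by (rule continuous_on_closed_Collect_le[OF cy continuous_on_const]) simp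
  moreover have "u \<in> S" using yu x2 by (auto simp: S_def)
  moreover have "bdd_above S" unfolding S_def by (rule bdd_aboveI[of _ x2]) auto
  ultimately have zS: "Sup S \<in> S" using closed_contains_Sup by blast
  define z where "z = Sup S"
  have z: "u \<le> z" "z \<le> x2" "y z \<le> b" using zS unfolding z_def S_def by auto
  have "z \<noteq> x2" using z x2 by auto
  with z have zx: "z < x2" by auto
  have above: "y x > b" if "z < x" "x \<le> x2" for x
  proof (rule ccontr)
    assume "\<not> y x > b"
    then have "x \<in> S" using that z unfolding S_def by auto
    then have "x \<le> z" unfolding z_def by (rule cSup_upper) fact
    then show False using that by auto
  qed
  have "y x2 - y z \<le> 0 * (x2 - z)"
    by (rule IC_le[OF iy]) (use z zx x2 above h in auto)
  then show False using z x2 by auto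
qed

lemma S2:
  assumes iy: "isol y g u v" and yu: "y u \<ge> b" and h: "\<And>x. x \<in> {u..v} \<Longrightarrow> y x < b \<Longrightarrow> g x \<ge> 0"
  shows "\<forall>x\<in>{u..v}. y x \<ge> b"
  using S1[OF isol_neg[OF iy], of "-b"] yu h by force

lemma S3:
  assumes iy: "isol y g u v" and x1: "u < x1" "x1 \<le> v" and y1: "y x1 = 0"
    and nn: "\<And>x. x \<in> {u..x1} \<Longrightarrow> y x \<ge> 0"
    and gb: "\<And>x. u \<le> x \<Longrightarrow> x < x1 \<Longrightarrow> g x \<ge> m x - a * y x"
    and cm: "continuous_on {u..v} m" and m1: "m x1 > 0"
  shows False
proof -
  define e where "e = m x1 / 4"
  have e: "e > 0" using m1 by (simp add: e_def)
  have x1uv: "x1 \<in> {u..v}" using x1 by auto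
  obtain d1 where d1: "d1 > 0" "\<And>x. x \<in> {u..v} \<Longrightarrow> dist x x1 < d1 \<Longrightarrow> dist (m x) (m x1) < e"
    using cm x1uv e unfolding continuous_on_iff by metis
  have e2: "e / (\<bar>a\<bar> + 1) > 0" using e by simp
  obtain d2 where d2: "d2 > 0" "\<And>x. x \<in> {u..v} \<Longrightarrow> dist x x1 < d2 \<Longrightarrow> dist (y x) (y x1) < e / (\<bar>a\<bar> + 1)"
    using iy x1uv e2 unfolding isol_def continuous_on_iff by metis
  define t where "t = max u (x1 - min d1 d2 / 2)"
  have t: "u \<le> t" "t < x1" using x1 d1 d2 by (auto simp: t_def)
  have gx: "g x \<ge> 2 * e" if "t < x" "x < x1" for x
  proof -
    have xuv: "x \<in> {u..v}" using that t x1 by auto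
    have dx: "dist x x1 < d1" "dist x x1 < d2" using that t_def d1 d2 by (auto simp: dist_real_def)
    have "\<bar>m x - m x1\<bar> < e" using d1(2)[OF xuv dx(1)] by (simp add: dist_real_def)
    then have "m x1 - m x < e" by arith
    then have mx: "m x \<ge> 3 * e" using e_def by linarith
    have yx: "\<bar>y x\<bar> \<le> e / (\<bar>a\<bar> + 1)" using d2(2)[OF xuv dx(2)] y1 by (auto simp: dist_real_def)
    have "\<bar>a * y x\<bar> \<le> (\<bar>a\<bar> + 1) * (e / (\<bar>a\<bar> + 1))"
      unfolding abs_mult by (intro mult_mono) (use yx in auto)
    also have "\<dots> = e" by simp
    finally have "\<bar>a * y x\<bar> \<le> e" .
    moreover have "g x \<ge> m x - a * y x" using gb[of x] that t by auto
    ultimately show ?thesis using mx by linarith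
  qed
  have "y x1 - y t \<ge> (2 * e) * (x1 - t)"
    by (rule IC_ge[OF iy t(1)]) (use t x1 gx in auto)
  moreover have "(2 * e) * (x1 - t) > 0" using e t by simp
  moreover have "y t \<ge> 0" using nn t by auto
  ultimately show False using y1 by linarith
qed

lemma S3':
  assumes iy: "isol y g u v" and x1: "u < x1" "x1 \<le> v" and y1: "y x1 = 0"
    and np: "\<And>x. x \<in> {u..x1} \<Longrightarrow> y x \<le> 0"
    and gb: "\<And>x. u \<le> x \<Longrightarrow> x < x1 \<Longrightarrow> g x \<le> M x - a * y x"
    and cm: "continuous_on {u..v} M" and m1: "M x1 < 0"
  shows False
proof -
  have "continuous_on {u..v} (\<lambda>x. - M x)" using cm by (intro continuous_intros)
  show False
    by (rule S3[OF isol_neg[OF iy] x1, of "\<lambda>x. - M x" a]) (use y1 np gb m1 \<open>continuous_on {u..v} (\<lambda>x. - M x)\<close> in force)+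
qed

definition bsol :: "real \<Rightarrow> (real \<Rightarrow> real) \<Rightarrow> (real \<Rightarrow> real) \<Rightarrow> real \<Rightarrow> real \<Rightarrow> bool" where
  "bsol a y g u v \<longleftrightarrow> isol y g u v \<and>
     (\<forall>x\<in>{u..v}. min (fp x) (fm x) - a * y x \<le> g x \<and> g x \<le> max (fp x) (fm x) - a * y x)"

lemma bsol_sub: "bsol a y g u v \<Longrightarrow> u \<le> u' \<Longrightarrow> u' \<le> v' \<Longrightarrow> v' \<le> v \<Longrightarrow> bsol a y g u' v'"
  unfolding bsol_def using isol_sub by auto

lemma bound_lemma:
  assumes a: "a > 0" and b: "bsol a y g u v" and yu: "\<bar>y u\<bar> \<le> 1/a"
  shows "\<forall>x\<in>{u..v}. \<bar>y x\<bar> \<le> 1/a"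
proof -
  have iy: "isol y g u v" using b by (simp add: bsol_def)
  have up: "\<forall>x\<in>{u..v}. y x \<le> 1/a"
  proof (rule S1[OF iy])
    show "y u \<le> 1/a" using yu by auto
    fix x assume x: "x \<in> {u..v}" "y x > 1/a"
    have "a * y x > a * (1/a)" using x a by (intro mult_strict_left_mono) auto
    then have "a * y x > 1" using a by simp
    moreover have "g x \<le> max (fp x) (fm x) - a * y x" using b x by (auto simp: bsol_def)
    moreover have "max (fp x) (fm x) \<le> 1" using fp_bd[of x] fm_bd[of x] by auto
    ultimately show "g x \<le> 0" by linarith
  qed
  have lo: "\<forall>x\<in>{u..v}. y x \<ge> -1/a"
  proof (rule S2[OF iy])
    show "y u \<ge> -1/a" using yu by auto
    fix x assume x: "x \<in> {u..v}" "y x < -1/a"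
    have "a * y x < a * (-1/a)" using x a by (intro mult_strict_left_mono) auto
    then have "a * y x < -1" using a by simp
    moreover have "g x \<ge> min (fp x) (fm x) - a * y x" using b x by (auto simp: bsol_def)
    moreover have "min (fp x) (fm x) \<ge> -1" using fp_bd[of x] fm_bd[of x] by auto
    ultimately show "g x \<ge> 0" by linarith
  qed
  show ?thesis using up lo by (auto simp: abs_le_iff)
qed

lemma closure_ge:
  fixes y :: "real \<Rightarrow> real"
  assumes "continuous_on {u..v} y" "u < w" "w \<le> v" "\<And>x. u < x \<Longrightarrow> x < w \<Longrightarrow> y x \<ge> b"
  shows "y w \<ge> b"
proof (rule continuous_ge_on_closure[of "{u<..<w}" y w b])
  show "continuous_on (closure {u<..<w}) y" using assms by (auto intro: continuous_on_subset)
  show "w \<in> closure {u<..<w}" using assms by simp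
qed (use assms in auto)

lemma closure_le:
  fixes y :: "real \<Rightarrow> real"
  assumes "continuous_on {u..v} y" "u < w" "w \<le> v" "\<And>x. u < x \<Longrightarrow> x < w \<Longrightarrow> y x \<le> b"
  shows "y w \<le> b"
  using closure_ge[of u v "\<lambda>x. - y x" w "-b"] assms by (force intro: continuous_intros)

lemma first_le:
  fixes y :: "real \<Rightarrow> real"
  assumes "continuous_on {p..q} y" "x0 \<in> {p..q}" "y x0 \<le> 0"
  shows "\<exists>c. p \<le> c \<and> c \<le> q \<and> y c \<le> 0 \<and> (\<forall>x. p \<le> x \<longrightarrow> x < c \<longrightarrow> y x > 0)"
proof -
  define S where "S = {x \<in> {p..q}. y x \<le> 0}"
  have "closed S" unfolding S_def
    by (rule continuous_on_closed_Collect_le[OF assms(1) continuous_on_const]) simp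
  moreover have "x0 \<in> S" using assms by (auto simp: S_def)
  moreover have "bdd_below S" unfolding S_def by (rule bdd_belowI[of _ p]) auto
  ultimately have cS: "Inf S \<in> S" using closed_contains_Inf by blast
  have "y x > 0" if "p \<le> x" "x < Inf S" for x
  proof (rule ccontr)
    assume "\<not> y x > 0"
    moreover have "x \<le> q" using that cS by (auto simp: S_def)
    ultimately have "x \<in> S" using that by (auto simp: S_def)
    then have "Inf S \<le> x" by (rule cInf_lower) fact
    then show False using that by auto
  qed
  then show ?thesis using cS by (intro exI[of _ "Inf S"]) (auto simp: S_def)
qed

lemma first_ge:
  fixes y :: "real \<Rightarrow> real"
  assumes "continuous_on {p..q} y" "x0 \<in> {p..q}" "y x0 \<ge> 0"
  shows "\<exists>c. p \<le> c \<and> c \<le> q \<and> y c \<ge> 0 \<and> (\<forall>x. p \<le> x \<longrightarrow> x < c \<longrightarrow> y x < 0)"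
  using first_le[of p q "\<lambda>x. - y x" x0] assms by (force intro: continuous_intros)

definition lsol :: "real \<Rightarrow> (real \<Rightarrow> real) \<Rightarrow> (real \<Rightarrow> real) \<Rightarrow> real \<Rightarrow> real \<Rightarrow> bool" where
  "lsol a f y u v \<longleftrightarrow> u \<le> v \<and> continuous_on {u..v} y \<and>
     (\<forall>t\<in>{u..v}. ((\<lambda>x. f x - a * y x) has_integral (y t - y u)) {u..t})"

lemma lsol_of:
  assumes "isol y g u v" "\<And>x. u < x \<Longrightarrow> x < v \<Longrightarrow> g x = f x - a * y x"
  shows "lsol a f y u v"
  unfolding lsol_def
proof (intro conjI ballI)
  show "u \<le> v" "continuous_on {u..v} y" using assms unfolding isol_def by auto
  fix t assume t: "t \<in> {u..v}"
  have gi: "(g has_integral (y t - y u)) {u..t}" using assms t unfolding isol_def by auto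
  show "((\<lambda>x. f x - a * y x) has_integral (y t - y u)) {u..t}"
    by (rule has_integral_spike_finite[OF _ _ gi, of "{u, t, v}"]) (use assms(2) t in auto)
qed

lemma LU:
  assumes l1: "lsol a f y1 u v" and l2: "lsol a f y2 u v" and e: "y1 u = y2 u"
  shows "\<forall>t\<in>{u..v}. y1 t = y2 t"
proof -
  define D where "D = (\<lambda>x. y1 x - y2 x)"
  have cD: "continuous_on {u..v} D" using l1 l2 unfolding lsol_def D_def by (auto intro: continuous_intros)
  have Di: "((\<lambda>x. - a * D x) has_integral D t) {u..t}" if "t \<in> {u..v}" for t
  proof -
    have "((\<lambda>x. (f x - a * y1 x) - (f x - a * y2 x)) has_integral ((y1 t - y1 u) - (y2 t - y2 u))) {u..t}"
      using l1 l2 that unfolding lsol_def by (intro has_integral_diff[where f="\<lambda>x. f x - a * y1 x"]) auto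
    then show ?thesis using e by (simp add: D_def algebra_simps)
  qed
  have DI: "D t = integral {u..t} (\<lambda>x. - a * D x)" if "t \<in> {u..v}" for t
    by (rule sym, rule integral_unique, rule Di[OF that])
  define h where "h = (\<lambda>t. exp (a * t) * integral {u..t} (\<lambda>x. - a * D x))"
  have cmD: "continuous_on {u..v} (\<lambda>x. - a * D x)" using cD by (intro continuous_intros)
  have hd: "(h has_field_derivative 0) (at t within {u..v})" if t: "t \<in> {u..v}" for t
  proof -
    have I: "((\<lambda>t. integral {u..t} (\<lambda>x. - a * D x)) has_field_derivative (- a * D t)) (at t within {u..v})"
      using integral_has_vector_derivative[OF cmD t] by (simp add: has_real_derivative_iff_has_vector_derivative)
    have E: "((\<lambda>t. exp (a * t)) has_field_derivative (exp (a * t) * a)) (at t within {u..v})"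
      by (auto intro!: derivative_eq_intros)
    have "(h has_field_derivative (exp (a * t) * (- a * D t) + (exp (a * t) * a) * integral {u..t} (\<lambda>x. - a * D x))) (at t within {u..v})"
      unfolding h_def by (rule DERIV_mult'[OF E I])
    moreover have "exp (a * t) * (- a * D t) + (exp (a * t) * a) * integral {u..t} (\<lambda>x. - a * D x) = 0"
      using DI[OF t] by (simp add: algebra_simps)
    ultimately show ?thesis by simp
  qed
  obtain c where c: "\<forall>t\<in>{u..v}. h t = c"
    using has_field_derivative_zero_constant[OF convex_real_interval(5) hd] by blast
  have uu: "u \<in> {u..v}" using l1 by (auto simp: lsol_def)
  have "h u = 0" by (simp add: h_def)
  then have "c = 0" using c uu by auto
  show ?thesis
  proof
    fix t assume t: "t \<in> {u..v}"
    have "h t = 0" using c t \<open>c = 0\<close> by auto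
    then have "integral {u..t} (\<lambda>x. - a * D x) = 0" by (simp add: h_def)
    then have "D t = 0" using DI[OF t] by simp
    then show "y1 t = y2 t" by (simp add: D_def)
  qed
qed



lemma inv_a: "a \<ge> 10 \<Longrightarrow> 1 / a \<le> (1/10::real)"
  by (simp add: divide_simps)

lemma cont_min: "continuous_on S (\<lambda>x. min (fp x) (fm x))"
  and cont_max: "continuous_on S (\<lambda>x. max (fp x) (fm x))"
  by (intro continuous_intros cont_fp cont_fm)+

lemma bsolD: "bsol a y g u v \<Longrightarrow> x \<in> {u..v} \<Longrightarrow> min (fp x) (fm x) - a * y x \<le> g x \<and> g x \<le> max (fp x) (fm x) - a * y x"
  unfolding bsol_def by auto

lemma bsol_isol: "bsol a y g u v \<Longrightarrow> isol y g u v"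
  unfolding bsol_def by auto

lemma isol_cont: "isol y g u v \<Longrightarrow> continuous_on {u..v} y"
  unfolding isol_def by auto

lemma phase1:
  assumes a: "a \<ge> 10" and b: "bsol a y g s v" and s: "10/3 \<le> s" "s \<le> 11/3" and v: "41/9 \<le> v"
    and ys: "y s = 0"
  shows "\<exists>c1. 4 \<le> c1 \<and> c1 \<le> 41/9 \<and> y c1 = 0 \<and> (\<forall>x. s < x \<longrightarrow> x < c1 \<longrightarrow> y x > 0)"
proof -
  have iy: "isol y g s v" using b by (rule bsol_isol)
  have cy: "continuous_on {s..v} y" using iy by (rule isol_cont)
  have B: "\<forall>x\<in>{s..v}. \<bar>y x\<bar> \<le> 1/a" using bound_lemma[OF _ b] a ys by auto
  have ia: "1/a \<le> 1/10" using inv_a[OF a] .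
  have a0: "a > 0" using a by simp
  have i4: "isol y g s 4" using isol_sub[OF iy] s v by auto
  have A1: "\<forall>x\<in>{s..4}. y x \<ge> 0"
  proof (rule S2[OF i4])
    show "y s \<ge> 0" using ys by simp
    fix x :: real assume x: "x \<in> {s..4}" "y x < 0"
    have "min (fp x) (fm x) \<ge> 0" using Ta[of x] x s by auto
    moreover have "a * y x < 0" using x a0 by (simp add: mult_pos_neg)
    moreover have "g x \<ge> min (fp x) (fm x) - a * y x" using bsolD[OF b, of x] x v by auto
    ultimately show "g x \<ge> 0" by linarith
  qed
  have A2: "y x > 0" if "s < x" "x < 4" for x
  proof (rule ccontr)
    assume "\<not> y x > 0"
    then have yx: "y x = 0" using bspec[OF A1, of x] that by auto
    show False
    proof (rule S3[OF i4 that(1) _ yx])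
      show "x \<le> 4" using that by simp
      show "\<And>t. t \<in> {s..x} \<Longrightarrow> y t \<ge> 0" using A1 that by auto
      show "\<And>t. s \<le> t \<Longrightarrow> t < x \<Longrightarrow> g t \<ge> min (fp t) (fm t) - a * y t"
        using bsolD[OF b] that v by auto
      show "continuous_on {s..4} (\<lambda>x. min (fp x) (fm x))" by (rule cont_min)
      show "min (fp x) (fm x) > 0" using Ta'[of x] that s by auto
    qed
  qed
  have A3: "\<exists>x\<in>{4..41/9}. y x \<le> 0"
  proof (rule ccontr)
    assume "\<not> ?thesis"
    then have pos: "\<And>x. x \<in> {4..41/9} \<Longrightarrow> y x > 0" by force
    have "y (41/9) - y (13/3) \<le> (-1/2) * (41/9 - 13/3)"
    proof (rule IC_le[OF iy])
      fix x :: real assume x: "13/3 < x" "x < 41/9"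
      have "a * y x \<ge> 0" using pos[of x] x a0 by simp
      moreover have "max (fp x) (fm x) \<le> -1/2" using Tc[of x] x by auto
      moreover have "g x \<le> max (fp x) (fm x) - a * y x" using bsolD[OF b, of x] x s v by auto
      ultimately show "g x \<le> -1/2" by linarith
    qed (use s v in auto)
    moreover have "\<bar>y (13/3)\<bar> \<le> 1/a" using B s v by auto
    then have "y (13/3) \<le> 1/a" by linarith
    moreover have "y (41/9) > 0" using pos by simp
    ultimately show False using ia by simp
  qed
  then obtain x0 where x0: "x0 \<in> {4..41/9}" "y x0 \<le> 0" by blast
  have c4: "continuous_on {4..41/9} y" using cy s v by (auto intro: continuous_on_subset)
  obtain c where c: "4 \<le> c" "c \<le> 41/9" "y c \<le> 0" "\<And>x. 4 \<le> x \<Longrightarrow> x < c \<Longrightarrow> y x > 0"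
    using first_le[OF c4 x0] by blast
  have pos: "\<forall>x. s < x \<longrightarrow> x < c \<longrightarrow> y x > 0"
    using A2 c by (meson not_less)
  have "y c \<ge> 0"
  proof (cases "c = 4")
    case True then show ?thesis using A1 s by auto
  next
    case False
    then have "4 < c" using c by simp
    show ?thesis
      by (rule closure_ge[OF cy]) (use \<open>4 < c\<close> pos c s v in auto)
  qed
  then have "y c = 0" using c by simp
  moreover note pos
  ultimately show ?thesis using c by blast
qed

lemma phase2:
  assumes a: "a \<ge> 10" and b: "bsol a y g c v" and c: "4 \<le> c" "c \<le> 41/9" and v: "59/9 \<le> v"
    and yc: "y c = 0" and N: "\<And>x. x \<in> {c..v} \<Longrightarrow> y x < 0 \<Longrightarrow> g x = fm x - a * y x"
  shows "\<exists>c2. 6 \<le> c2 \<and> c2 \<le> 59/9 \<and> y c2 = 0 \<and> (\<forall>x. c < x \<longrightarrow> x < c2 \<longrightarrow> y x < 0)"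
proof -
  have iy: "isol y g c v" using b by (rule bsol_isol)
  have cy: "continuous_on {c..v} y" using iy by (rule isol_cont)
  have B: "\<forall>x\<in>{c..v}. \<bar>y x\<bar> \<le> 1/a" using bound_lemma[OF _ b] a yc by auto
  have ia: "1/a \<le> 1/10" using inv_a[OF a] .
  have a0: "a > 0" using a by simp
  have i14: "isol y g c (14/3)" using isol_sub[OF iy] c v by auto
  have A1: "\<forall>x\<in>{c..14/3}. y x \<le> 0"
  proof (rule S1[OF i14])
    show "y c \<le> 0" using yc by simp
    fix x :: real assume x: "x \<in> {c..14/3}" "y x > 0"
    have "max (fp x) (fm x) \<le> 0" using Tb[of x] x c by auto
    moreover have "a * y x > 0" using x a0 by simp
    moreover have "g x \<le> max (fp x) (fm x) - a * y x" using bsolD[OF b, of x] x v by auto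
    ultimately show "g x \<le> 0" by linarith
  qed
  have A2: "y x < 0" if "c < x" "x < 14/3" for x
  proof (rule ccontr)
    assume "\<not> y x < 0"
    then have yx: "y x = 0" using bspec[OF A1, of x] that by auto
    show False
    proof (rule S3'[OF i14 that(1) _ yx])
      show "x \<le> 14/3" using that by simp
      show "\<And>t. t \<in> {c..x} \<Longrightarrow> y t \<le> 0" using A1 that by auto
      show "\<And>t. c \<le> t \<Longrightarrow> t < x \<Longrightarrow> g t \<le> max (fp t) (fm t) - a * y t"
        using bsolD[OF b] that v by auto
      show "continuous_on {c..14/3} (\<lambda>x. max (fp x) (fm x))" by (rule cont_max)
      show "max (fp x) (fm x) < 0" using Tb'[of x] that c by auto
    qed
  qed
  have A3: "y z < 0" if "c < z" "z < 6" for z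
  proof (cases "z < 14/3")
    case True then show ?thesis using A2 that by auto
  next
    case False
    show ?thesis
    proof (rule ccontr)
      assume "\<not> y z < 0"
      then have yz: "y z \<ge> 0" by simp
      have cz: "continuous_on {23/5..z} y" using cy c v False that by (auto intro: continuous_on_subset)
      obtain x1 where x1: "23/5 \<le> x1" "x1 \<le> z" "y x1 \<ge> 0" "\<And>x. 23/5 \<le> x \<Longrightarrow> x < x1 \<Longrightarrow> y x < 0"
        using first_ge[OF cz _ yz] False by auto
      have y235: "y (23/5) < 0" using A2 c by auto
      then have x1g: "23/5 < x1" using x1 by (cases "x1 = 23/5") auto
      have cy': "continuous_on {23/5..v} y" using cy c by (auto intro: continuous_on_subset)
      have neg1: "\<forall>x. 23/5 < x \<longrightarrow> x < x1 \<longrightarrow> y x \<le> 0" using x1(4) by force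
      have "y x1 \<le> 0"
        by (rule closure_le[OF cy']) (use x1g x1 c v that neg1 in auto)
      then have yx1: "y x1 = 0" using x1 by simp
      have i1: "isol y g (23/5) x1" using isol_sub[OF iy] c v x1 x1g that by auto
      show False
      proof (rule S3'[OF i1 x1g order_refl yx1])
        show "\<And>t. t \<in> {23/5..x1} \<Longrightarrow> y t \<le> 0" using x1 yx1 by (force simp: le_less)
        show "\<And>t. 23/5 \<le> t \<Longrightarrow> t < x1 \<Longrightarrow> g t \<le> fm t - a * y t"
          using N x1 c v that by auto
        show "continuous_on {23/5..x1} fm" by (rule cont_fm)
        show "fm x1 < 0" using Td[of x1] x1 x1g that by auto
      qed
    qed
  qed
  have A4: "\<exists>x\<in>{6..59/9}. y x \<ge> 0"
  proof (rule ccontr)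
    assume "\<not> ?thesis"
    then have neg: "\<And>x. x \<in> {6..59/9} \<Longrightarrow> y x < 0" by (meson not_le)
    have "y (59/9) - y (19/3) \<ge> (1/2) * (59/9 - 19/3)"
    proof (rule IC_ge[OF iy])
      fix x :: real assume x: "19/3 < x" "x < 59/9"
      have "a * y x < 0" using neg[of x] x a0 by (simp add: mult_pos_neg)
      moreover have "fm x \<ge> 1/2" using Te[of x] x by auto
      moreover have "g x = fm x - a * y x" using N[of x] neg[of x] x c v by auto
      ultimately show "g x \<ge> 1/2" by linarith
    qed (use c v in auto)
    moreover have "\<bar>y (19/3)\<bar> \<le> 1/a" using B c v by auto
    then have "y (19/3) \<ge> - 1/a" by linarith
    moreover have "y (59/9) < 0" using neg by simp
    ultimately show False using ia by simp
  qed
  then obtain x0 where x0: "x0 \<in> {6..59/9}" "y x0 \<ge> 0" by blast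
  have c6: "continuous_on {6..59/9} y" using cy c v by (auto intro: continuous_on_subset)
  obtain d where d: "6 \<le> d" "d \<le> 59/9" "y d \<ge> 0" "\<And>x. 6 \<le> x \<Longrightarrow> x < d \<Longrightarrow> y x < 0"
    using first_ge[OF c6 x0] by blast
  have neg: "\<forall>x. c < x \<longrightarrow> x < d \<longrightarrow> y x < 0"
    using A3 d by (meson not_less)
  have "y d \<le> 0"
    by (rule closure_le[OF cy]) (use neg c d v in auto)
  then have "y d = 0" using d by simp
  then show ?thesis using d neg by blast
qed

lemma phase3:
  assumes a: "a \<ge> 10" and b: "bsol a y g c v" and c: "6 \<le> c" "c \<le> 59/9" and v: "65/9 \<le> v"
    and yc: "y c = 0" and P: "\<And>x. x \<in> {c..v} \<Longrightarrow> y x > 0 \<Longrightarrow> g x = fp x - a * y x"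
  shows "\<exists>c3. 20/3 \<le> c3 \<and> c3 \<le> 65/9 \<and> y c3 = 0 \<and> (\<forall>x. c < x \<longrightarrow> x < c3 \<longrightarrow> y x > 0)"
proof -
  have iy: "isol y g c v" using b by (rule bsol_isol)
  have cy: "continuous_on {c..v} y" using iy by (rule isol_cont)
  have B: "\<forall>x\<in>{c..v}. \<bar>y x\<bar> \<le> 1/a" using bound_lemma[OF _ b] a yc by auto
  have ia: "1/a \<le> 1/10" using inv_a[OF a] .
  have a0: "a > 0" using a by simp
  have i20: "isol y g c (20/3)" using isol_sub[OF iy] c v by auto
  have A1: "\<forall>x\<in>{c..20/3}. y x \<ge> 0"
  proof (rule S2[OF i20])
    show "y c \<ge> 0" using yc by simp
    fix x :: real assume x: "x \<in> {c..20/3}" "y x < 0"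
    have "min (fp x) (fm x) \<ge> 0" using Tf[of x] x c by auto
    moreover have "a * y x < 0" using x a0 by (simp add: mult_pos_neg)
    moreover have "g x \<ge> min (fp x) (fm x) - a * y x" using bsolD[OF b, of x] x v by auto
    ultimately show "g x \<ge> 0" by linarith
  qed
  have A2: "y x > 0" if "c < x" "x < 20/3" for x
  proof (rule ccontr)
    assume "\<not> y x > 0"
    then have yx: "y x = 0" using bspec[OF A1, of x] that by auto
    show False
    proof (rule S3[OF i20 that(1) _ yx])
      show "x \<le> 20/3" using that by simp
      show "\<And>t. t \<in> {c..x} \<Longrightarrow> y t \<ge> 0" using A1 that by auto
      show "\<And>t. c \<le> t \<Longrightarrow> t < x \<Longrightarrow> g t \<ge> min (fp t) (fm t) - a * y t"
        using bsolD[OF b] that v by auto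
      show "continuous_on {c..20/3} (\<lambda>x. min (fp x) (fm x))" by (rule cont_min)
      show "min (fp x) (fm x) > 0" using Tf'[of x] that c by auto
    qed
  qed
  have A3: "\<exists>x\<in>{20/3..65/9}. y x \<le> 0"
  proof (rule ccontr)
    assume "\<not> ?thesis"
    then have pos: "\<And>x. x \<in> {20/3..65/9} \<Longrightarrow> y x > 0" by force
    have "y (65/9) - y (61/9) \<le> (-1/2) * (65/9 - 61/9)"
    proof (rule IC_le[OF iy])
      fix x :: real assume x: "61/9 < x" "x < 65/9"
      have "a * y x \<ge> 0" using pos[of x] x a0 by simp
      moreover have "fp x \<le> -1/2" using Tg[of x] x by auto
      moreover have "g x = fp x - a * y x" using P[of x] pos[of x] x c v by auto
      ultimately show "g x \<le> -1/2" by linarith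
    qed (use c v in auto)
    moreover have "\<bar>y (61/9)\<bar> \<le> 1/a" using B c v by auto
    then have "y (61/9) \<le> 1/a" by linarith
    moreover have "y (65/9) > 0" using pos by simp
    ultimately show False using ia by simp
  qed
  then obtain x0 where x0: "x0 \<in> {20/3..65/9}" "y x0 \<le> 0" by blast
  have c6: "continuous_on {20/3..65/9} y" using cy c v by (auto intro: continuous_on_subset)
  obtain d where d: "20/3 \<le> d" "d \<le> 65/9" "y d \<le> 0" "\<And>x. 20/3 \<le> x \<Longrightarrow> x < d \<Longrightarrow> y x > 0"
    using first_le[OF c6 x0] by blast
  have pos: "\<forall>x. c < x \<longrightarrow> x < d \<longrightarrow> y x > 0"
    using A2 d by (meson not_less)
  have "y d \<ge> 0"
    by (rule closure_ge[OF cy]) (use pos c d v in auto)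
  then have "y d = 0" using d by simp
  then show ?thesis using d pos by blast
qed

definition fsol :: "real \<Rightarrow> (real \<Rightarrow> real) \<Rightarrow> (real \<Rightarrow> real) \<Rightarrow> real \<Rightarrow> real \<Rightarrow> bool" where
  "fsol a y g u v \<longleftrightarrow> bsol a y g u v \<and> (\<forall>x\<in>{u..v}. y x > 0 \<longrightarrow> g x = fp x - a * y x) \<and>
     (\<forall>x\<in>{u..v}. y x < 0 \<longrightarrow> g x = fm x - a * y x)"

lemma fsol_sub: "fsol a y g u v \<Longrightarrow> u \<le> u' \<Longrightarrow> u' \<le> v' \<Longrightarrow> v' \<le> v \<Longrightarrow> fsol a y g u' v'"
  unfolding fsol_def using bsol_sub by auto

lemma sliding_lemma:
  assumes f: "fsol a y g u v" and a: "a \<ge> 0" and yu: "y u = 0"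
    and sg: "\<And>x. x \<in> {u..v} \<Longrightarrow> fp x \<le> 0 \<and> fm x \<ge> 0"
  shows "\<forall>x\<in>{u..v}. y x = 0"
proof -
  have iy: "isol y g u v" using f by (auto simp: fsol_def bsol_def)
  have "\<forall>x\<in>{u..v}. y x \<le> 0"
  proof (rule S1[OF iy])
    fix x :: real assume x: "x \<in> {u..v}" "y x > 0"
    then have "g x = fp x - a * y x" using f by (auto simp: fsol_def)
    moreover have "a * y x \<ge> 0" using a x by simp
    ultimately show "g x \<le> 0" using sg[OF x(1)] by linarith
  qed (use yu in simp)
  moreover have "\<forall>x\<in>{u..v}. y x \<ge> 0"
  proof (rule S2[OF iy])
    fix x :: real assume x: "x \<in> {u..v}" "y x < 0"
    then have "g x = fm x - a * y x" using f by (auto simp: fsol_def)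
    moreover have "a * y x \<le> 0" using a x by (simp add: mult_nonneg_nonpos)
    ultimately show "g x \<ge> 0" using sg[OF x(1)] by linarith
  qed (use yu in simp)
  ultimately show ?thesis by force
qed

lemma landing:
  assumes a: "a \<ge> 10" and f: "fsol a y g s (22/3)" and s: "10/3 \<le> s" "s \<le> 11/3" and ys: "y s = 0"
  shows "\<exists>c3. 20/3 \<le> c3 \<and> c3 \<le> 65/9 \<and> (\<forall>x\<in>{c3..22/3}. y x = 0)"
proof -
  have b: "bsol a y g s (22/3)" using f by (simp add: fsol_def)
  obtain c1 where c1: "4 \<le> c1" "c1 \<le> 41/9" "y c1 = 0" using phase1[OF a b s _ ys] by auto
  have b2: "bsol a y g c1 (22/3)" using bsol_sub[OF b] c1 s by auto
  obtain c2 where c2: "6 \<le> c2" "c2 \<le> 59/9" "y c2 = 0"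
    using phase2[OF a b2 c1(1,2) _ c1(3)] f c1 s by (auto simp: fsol_def)
  have b3: "bsol a y g c2 (22/3)" using bsol_sub[OF b] c1 c2 s by auto
  obtain c3 where c3: "20/3 \<le> c3" "c3 \<le> 65/9" "y c3 = 0"
    using phase3[OF a b3 c2(1,2) _ c2(3)] f c1 c2 s by (auto simp: fsol_def)
  have "\<forall>x\<in>{c3..22/3}. y x = 0"
    by (rule sliding_lemma[OF fsol_sub[OF f]]) (use a c3 s Th in auto)
  then show ?thesis using c3 by blast
qed

lemma match_pos:
  assumes i1: "isol y1 g1 u c1" and i2: "isol y2 g2 u c2" and u: "u < c1" "u < c2"
    and z: "y1 c1 = 0" "y2 c2 = 0"
    and p1: "\<And>x. u < x \<Longrightarrow> x < c1 \<Longrightarrow> y1 x > 0" and p2: "\<And>x. u < x \<Longrightarrow> x < c2 \<Longrightarrow> y2 x > 0"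
    and e1: "\<And>x. u < x \<Longrightarrow> x < c1 \<Longrightarrow> g1 x = f x - a * y1 x"
    and e2: "\<And>x. u < x \<Longrightarrow> x < c2 \<Longrightarrow> g2 x = f x - a * y2 x"
    and e: "y1 u = y2 u"
  shows "c1 = c2 \<and> (\<forall>x\<in>{u..c1}. y1 x = y2 x)"
proof -
  have gen: "\<forall>x\<in>{u..ca}. ya x = yb x"
    if ia: "isol ya ga u ca" and ib: "isol yb gb u cb" and le: "u < ca" "ca \<le> cb"
      and ea: "\<And>x. u < x \<Longrightarrow> x < ca \<Longrightarrow> ga x = f x - a * ya x"
      and eb: "\<And>x. u < x \<Longrightarrow> x < cb \<Longrightarrow> gb x = f x - a * yb x"
      and ee: "ya u = yb u"
    for ya yb ga gb ca cb
  proof -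
    have "lsol a f ya u ca" by (rule lsol_of[OF ia]) (use ea in auto)
    moreover have "lsol a f yb u ca" by (rule lsol_of[OF isol_sub[OF ib]]) (use eb le in auto)
    ultimately show ?thesis using LU ee by blast
  qed
  have "\<not> c1 < c2"
  proof
    assume lt: "c1 < c2"
    have "y1 c1 = y2 c1" using gen[OF i1 i2 u(1) _ e1 e2 e] lt u by auto
    then show False using z p2[of c1] u lt by auto
  qed
  moreover have "\<not> c2 < c1"
  proof
    assume lt: "c2 < c1"
    have "y2 c2 = y1 c2" using gen[OF i2 i1 u(2) _ e2 e1 e[symmetric]] lt u by auto
    then show False using z p1[of c2] u lt by auto
  qed
  ultimately have "c1 = c2" by simp
  then show ?thesis using gen[OF i1 i2 u(1) _ e1 e2 e] by auto
qed

lemma match_neg: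
  assumes i1: "isol y1 g1 u c1" and i2: "isol y2 g2 u c2" and u: "u < c1" "u < c2"
    and z: "y1 c1 = 0" "y2 c2 = 0"
    and p1: "\<And>x. u < x \<Longrightarrow> x < c1 \<Longrightarrow> y1 x < 0" and p2: "\<And>x. u < x \<Longrightarrow> x < c2 \<Longrightarrow> y2 x < 0"
    and e1: "\<And>x. u < x \<Longrightarrow> x < c1 \<Longrightarrow> g1 x = f x - a * y1 x"
    and e2: "\<And>x. u < x \<Longrightarrow> x < c2 \<Longrightarrow> g2 x = f x - a * y2 x"
    and e: "y1 u = y2 u"
  shows "c1 = c2 \<and> (\<forall>x\<in>{u..c1}. y1 x = y2 x)"
  using match_pos[OF isol_neg[OF i1] isol_neg[OF i2] u, of "\<lambda>x. - f x" a] z p1 p2 e1 e2 e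
  by force

lemma uniq_period:
  assumes a: "a \<ge> 10" and f1: "fsol a y1 g1 s (22/3)" and f2: "fsol a y2 g2 s (22/3)"
    and s: "10/3 \<le> s" "s \<le> 11/3" and z1: "y1 s = 0" and z2: "y2 s = 0"
  shows "\<forall>x\<in>{s..22/3}. y1 x = y2 x"
proof -
  have b1: "bsol a y1 g1 s (22/3)" and b2: "bsol a y2 g2 s (22/3)" using f1 f2 by (simp_all add: fsol_def)
  obtain c1 where c1: "4 \<le> c1" "c1 \<le> 41/9" "y1 c1 = 0" "\<forall>x. s < x \<longrightarrow> x < c1 \<longrightarrow> y1 x > 0"
    using phase1[OF a b1 s _ z1] by auto
  obtain d1 where d1: "4 \<le> d1" "d1 \<le> 41/9" "y2 d1 = 0" "\<forall>x. s < x \<longrightarrow> x < d1 \<longrightarrow> y2 x > 0"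
    using phase1[OF a b2 s _ z2] by auto
  have m1: "c1 = d1 \<and> (\<forall>x\<in>{s..c1}. y1 x = y2 x)"
  proof (rule match_pos[where f = fp and a = a])
    show "isol y1 g1 s c1" using isol_sub[OF bsol_isol[OF b1]] c1 s by auto
    show "isol y2 g2 s d1" using isol_sub[OF bsol_isol[OF b2]] d1 s by auto
  qed (use c1 d1 s z1 z2 f1 f2 in \<open>auto simp: fsol_def\<close>)
  have d1e: "d1 = c1" using m1 by simp
  have b1': "bsol a y1 g1 c1 (22/3)" and b2': "bsol a y2 g2 c1 (22/3)"
    using bsol_sub[OF b1] bsol_sub[OF b2] c1 s by auto
  obtain c2 where c2: "6 \<le> c2" "c2 \<le> 59/9" "y1 c2 = 0" "\<forall>x. c1 < x \<longrightarrow> x < c2 \<longrightarrow> y1 x < 0"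
    using phase2[OF a b1' c1(1,2) _ c1(3)] f1 c1 s by (auto simp: fsol_def)
  obtain d2 where d2: "6 \<le> d2" "d2 \<le> 59/9" "y2 d2 = 0" "\<forall>x. c1 < x \<longrightarrow> x < d2 \<longrightarrow> y2 x < 0"
    using phase2[OF a b2' c1(1,2) _ ] d1 d1e f2 c1 s by (auto simp: fsol_def)
  have m2: "c2 = d2 \<and> (\<forall>x\<in>{c1..c2}. y1 x = y2 x)"
  proof (rule match_neg[where f = fm and a = a])
    show "isol y1 g1 c1 c2" using isol_sub[OF bsol_isol[OF b1]] c1 c2 s by auto
    show "isol y2 g2 c1 d2" using isol_sub[OF bsol_isol[OF b2]] c1 d2 s by auto
  qed (use c1 d1 d1e c2 d2 s f1 f2 in \<open>auto simp: fsol_def\<close>)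
  have d2e: "d2 = c2" using m2 by simp
  have b1'': "bsol a y1 g1 c2 (22/3)" and b2'': "bsol a y2 g2 c2 (22/3)"
    using bsol_sub[OF b1] bsol_sub[OF b2] c1 c2 s by auto
  obtain c3 where c3: "20/3 \<le> c3" "c3 \<le> 65/9" "y1 c3 = 0" "\<forall>x. c2 < x \<longrightarrow> x < c3 \<longrightarrow> y1 x > 0"
    using phase3[OF a b1'' c2(1,2) _ c2(3)] f1 c1 c2 s by (auto simp: fsol_def)
  obtain d3 where d3: "20/3 \<le> d3" "d3 \<le> 65/9" "y2 d3 = 0" "\<forall>x. c2 < x \<longrightarrow> x < d3 \<longrightarrow> y2 x > 0"
    using phase3[OF a b2'' c2(1,2) _ ] d2 d2e f2 c1 c2 s by (auto simp: fsol_def)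
  have m3: "c3 = d3 \<and> (\<forall>x\<in>{c2..c3}. y1 x = y2 x)"
  proof (rule match_pos[where f = fp and a = a])
    show "isol y1 g1 c2 c3" using isol_sub[OF bsol_isol[OF b1]] c1 c2 c3 s by auto
    show "isol y2 g2 c2 d3" using isol_sub[OF bsol_isol[OF b2]] c1 c2 d3 s by auto
  qed (use c1 c2 d2 d2e c3 d3 s f1 f2 in \<open>auto simp: fsol_def\<close>)
  have s1: "\<forall>x\<in>{c3..22/3}. y1 x = 0"
    by (rule sliding_lemma[OF fsol_sub[OF f1]]) (use a c1 c2 c3 s Th in auto)
  have s2: "\<forall>x\<in>{c3..22/3}. y2 x = 0"
    using m3 by (intro sliding_lemma[OF fsol_sub[OF f2]]) (use a c1 c2 d3 s Th in auto)
  show ?thesis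
  proof
    fix x :: real assume x: "x \<in> {s..22/3}"
    consider "x \<le> c1" | "c1 \<le> x \<and> x \<le> c2" | "c2 \<le> x \<and> x \<le> c3" | "c3 \<le> x" by linarith
    then show "y1 x = y2 x"
    proof cases
      case 1 then show ?thesis using m1 x by auto
    next
      case 2 then show ?thesis using m2 by auto
    next
      case 3 then show ?thesis using m3 by auto
    next
      case 4 then show ?thesis using s1 s2 x by auto
    qed
  qed
qed



definition ypart :: "real \<Rightarrow> real \<Rightarrow> real \<Rightarrow> real" where
  "ypart a w x = (w * cos (w * x) - a * sin (w * x)) / (a^2 + w^2)"

definition Esol :: "real \<Rightarrow> real \<Rightarrow> real \<Rightarrow> real \<Rightarrow> real" where
  "Esol a w u x = ypart a w x - ypart a w u * exp (- a * (x - u))"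

lemma Esol_start [simp]: "Esol a w u u = 0"
  by (simp add: Esol_def)

lemma Esol_alg:
  fixes N a w S C K :: real
  assumes N: "N = a * a + w * w" and nz: "N \<noteq> 0"
  shows "(- (w * w) * S - a * w * C) / N - K * (- a) = - S - a * ((w * C - a * S) / N - K)"
proof -
  have e1: "(w * C - a * S) / N * N = w * C - a * S" using nz by simp
  have "(- S - a * ((w * C - a * S) / N)) * N = - S * N - a * ((w * C - a * S) / N * N)"
    by (simp add: algebra_simps)
  also have "\<dots> = - S * (a * a + w * w) - a * (w * C - a * S)" using e1 N by simp
  also have "\<dots> = - (w * w) * S - a * w * C" by (simp add: algebra_simps)
  finally have "(- (w * w) * S - a * w * C) / N = - S - a * ((w * C - a * S) / N)"
    using nz by (simp add: divide_eq_eq)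
  then show ?thesis by (simp add: algebra_simps)
qed

lemma Esol_deriv:
  assumes w: "w > 0"
  shows "(Esol a w u has_real_derivative (- sin (w * x) - a * Esol a w u x)) (at x)"
proof -
  have pos: "a^2 + w^2 > 0" using w by (simp add: add_nonneg_pos)
  have d1: "((\<lambda>x. ypart a w x) has_real_derivative ((- (w * w) * sin (w * x) - a * w * cos (w * x)) / (a^2 + w^2))) (at x)"
  proof -
    have d0: "((\<lambda>x. w * cos (w * x) - a * sin (w * x)) has_real_derivative (- (w * w) * sin (w * x) - a * w * cos (w * x))) (at x)"
      by (auto intro!: derivative_eq_intros simp: algebra_simps)
    show ?thesis unfolding ypart_def by (rule DERIV_cdivide[OF d0])
  qed
  have d2: "((\<lambda>x. ypart a w u * exp (- a * (x - u))) has_real_derivative (ypart a w u * exp (- a * (x - u)) * (- a))) (at x)"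
    by (auto intro!: derivative_eq_intros)
  have "(Esol a w u has_real_derivative ((- (w * w) * sin (w * x) - a * w * cos (w * x)) / (a^2 + w^2) - ypart a w u * exp (- a * (x - u)) * (- a))) (at x)"
    unfolding Esol_def[abs_def] by (rule DERIV_diff[OF d1 d2])
  moreover have "(- (w * w) * sin (w * x) - a * w * cos (w * x)) / (a^2 + w^2) - ypart a w u * exp (- a * (x - u)) * (- a)
     = - sin (w * x) - a * Esol a w u x"
    unfolding Esol_def ypart_def[of a w x]
    by (rule Esol_alg) (use pos in \<open>auto simp: power2_eq_square\<close>)
  ultimately show ?thesis by simp
qed

abbreviation "Ep a u \<equiv> Esol a (3 * pi / 2) u"
abbreviation "Em a u \<equiv> Esol a (pi / 2) u"

lemma Ep_deriv: "(Ep a u has_real_derivative (fp x - a * Ep a u x)) (at x)"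
proof -
  have "3 * pi / 2 * x = 3 * pi * x / 2" by simp
  then show ?thesis using Esol_deriv[of "3 * pi / 2" a u x] by (simp add: fp_def)
qed

lemma Em_deriv: "(Em a u has_real_derivative (fm x - a * Em a u x)) (at x)"
proof -
  have "pi / 2 * x = pi * x / 2" by simp
  then show ?thesis using Esol_deriv[of "pi / 2" a u x] by (simp add: fm_def)
qed

lemma deriv_isol:
  assumes d: "\<And>x. (y has_real_derivative (g x)) (at x)" and pq: "p \<le> q"
  shows "isol y g p q"
  unfolding isol_def
proof (intro conjI allI impI)
  show "p \<le> q" by fact
  show "continuous_on {p..q} y"
    using d by (intro continuous_at_imp_continuous_on ballI) (auto intro: DERIV_isCont)
  fix s t assume st: "p \<le> s" "s \<le> t" "t \<le> q"
  show "(g has_integral y t - y s) {s..t}"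
    by (rule fundamental_theorem_of_calculus[OF st(2)])
       (use d in \<open>auto simp: has_real_derivative_iff_has_vector_derivative intro: has_vector_derivative_at_within\<close>)
qed

lemma Ep_fsolp: "p \<le> q \<Longrightarrow> bsol a (Ep a u) (\<lambda>x. fp x - a * Ep a u x) p q \<and>
   (\<forall>x\<in>{p..q}. Ep a u x > 0 \<longrightarrow> fp x - a * Ep a u x = fp x - a * Ep a u x)"
  unfolding bsol_def by (auto intro: deriv_isol Ep_deriv)

lemma Em_bsol: "p \<le> q \<Longrightarrow> bsol a (Em a u) (\<lambda>x. fm x - a * Em a u x) p q"
  unfolding bsol_def by (auto intro: deriv_isol Em_deriv)

lemma Ep_bsol: "p \<le> q \<Longrightarrow> bsol a (Ep a u) (\<lambda>x. fp x - a * Ep a u x) p q"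
  using Ep_fsolp by blast

lemma cont_Esol: "w > 0 \<Longrightarrow> continuous_on S (Esol a w u)"
  unfolding Esol_def[abs_def] ypart_def by (intro continuous_intros) (auto simp: add_nonneg_pos)

lemma construct:
  assumes a: "a \<ge> 10" and s: "10/3 \<le> s" "s \<le> 11/3"
  shows "\<exists>Q G. Q s = 0 \<and> (\<forall>x\<in>{65/9..22/3}. Q x = 0) \<and>
     (\<forall>x\<in>{s..22/3}. G x \<in> filippov_rhs a x (Q x)) \<and>
     (\<forall>u v. s \<le> u \<longrightarrow> u \<le> v \<longrightarrow> v \<le> 22/3 \<longrightarrow> (G has_integral (Q v - Q u)) {u..v})"
proof -
  define E1 where "E1 = Ep a s"
  obtain c1 where c1: "4 \<le> c1" "c1 \<le> 41/9" "E1 c1 = 0" "\<forall>x. s < x \<longrightarrow> x < c1 \<longrightarrow> E1 x > 0"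
    using phase1[OF a Ep_bsol[of s "22/3" a s] s] s unfolding E1_def by auto
  define E2 where "E2 = Em a c1"
  obtain c2 where c2: "6 \<le> c2" "c2 \<le> 59/9" "E2 c2 = 0" "\<forall>x. c1 < x \<longrightarrow> x < c2 \<longrightarrow> E2 x < 0"
    using phase2[OF a Em_bsol[of c1 "22/3" a c1] c1(1,2)] c1 unfolding E2_def by auto
  define E3 where "E3 = Ep a c2"
  obtain c3 where c3: "20/3 \<le> c3" "c3 \<le> 65/9" "E3 c3 = 0" "\<forall>x. c2 < x \<longrightarrow> x < c3 \<longrightarrow> E3 x > 0"
    using phase3[OF a Ep_bsol[of c2 "22/3" a c2] c2(1,2)] c2 unfolding E3_def by auto
  define R2 where "R2 = (\<lambda>x. if x \<le> c3 then E3 x else 0)"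
  define R1 where "R1 = (\<lambda>x. if x \<le> c2 then E2 x else R2 x)"
  define Q where "Q = (\<lambda>x. if x \<le> c1 then E1 x else R1 x)"
  have E10: "E1 s = 0" and E20: "E2 c1 = 0" and E30: "E3 c2 = 0" by (simp_all add: E1_def E2_def E3_def)
  have cE1: "continuous_on S E1" and cE2: "continuous_on S E2" and cE3: "continuous_on S E3" for S
    by (simp_all add: E1_def E2_def E3_def cont_Esol)
  have cR2: "continuous_on UNIV R2" unfolding R2_def
    by (rule continuous_on_cases_le[where h = "\<lambda>x. x", simplified])
       (auto simp: c3 cE3 intro: continuous_on_const)
  have R2c2: "R2 c2 = 0" using c2 c3 E30 by (simp add: R2_def)
  have cR1: "continuous_on UNIV R1" unfolding R1_def
    by (rule continuous_on_cases_le[where h = "\<lambda>x. x", simplified])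
       (use c2 R2c2 in \<open>auto simp: cE2 intro: continuous_on_subset[OF cR2]\<close>)
  have R1c1: "R1 c1 = 0" using c1 c2 E20 by (simp add: R1_def)
  have cQ: "continuous_on UNIV Q" unfolding Q_def
    by (rule continuous_on_cases_le[where h = "\<lambda>x. x", simplified])
       (use c1 R1c1 in \<open>auto simp: cE1 intro: continuous_on_subset[OF cR1]\<close>)
  have Q1: "Q x = E1 x" if "x \<le> c1" for x using that by (simp add: Q_def)
  have Q2: "Q x = E2 x" if "c1 < x" "x \<le> c2" for x using that by (simp add: Q_def R1_def)
  have Q3: "Q x = E3 x" if "c2 < x" "x \<le> c3" for x using that c1 c2 by (simp add: Q_def R1_def R2_def)
  have Q4: "Q x = 0" if "c3 < x" for x using that c1 c2 c3 by (simp add: Q_def R1_def R2_def)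
  have Qs: "Q s = 0" using Q1[of s] c1 s E10 by simp
  define G where "G = (\<lambda>x. if Q x > 0 then fp x - a * Q x else if Q x < 0 then fm x - a * Q x
      else if c3 < x \<and> x < 22/3 then 0 else (fp x + fm x) / 2)"
  have sel: "G x \<in> filippov_rhs a x (Q x)" if x: "x \<in> {s..22/3}" for x
  proof -
    consider "Q x > 0" | "Q x < 0" | "Q x = 0 \<and> c3 < x \<and> x < 22/3" | "Q x = 0 \<and> \<not> (c3 < x \<and> x < 22/3)"
      by linarith
    then show ?thesis
    proof cases
      case 1 then show ?thesis by (simp add: G_def sel_pos)
    next
      case 2 then show ?thesis by (simp add: G_def sel_neg)
    next
      case 3
      have "cos (pi * x) < -1/2" using Ti[of x] 3 c3 by auto
      then show ?thesis using 3 by (simp add: G_def sel_slide)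
    next
      case 4
      then have eq: "G x = (fp x + fm x) / 2" by (auto simp: G_def)
      have q0: "Q x = 0" using 4 by simp
      show ?thesis unfolding eq q0 by (rule sel_zero)
    qed
  qed
  have der: "(Q has_real_derivative G x) (at x)" if x: "s < x" "x < 22/3" "x \<notin> {c1, c2, c3}" for x
  proof -
    consider "x < c1" | "c1 < x \<and> x < c2" | "c2 < x \<and> x < c3" | "c3 < x" using x by force
    then show ?thesis
    proof cases
      case 1
      have pos: "Q x > 0" using c1 1 x Q1[of x] by auto
      have "(E1 has_real_derivative (fp x - a * E1 x)) (at x)" unfolding E1_def by (rule Ep_deriv)
      then have "(Q has_real_derivative (fp x - a * E1 x)) (at x)"
        by (rule has_field_derivative_transform_within_open[of _ _ _ "{..<c1}"]) (use 1 Q1 in auto)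
      then show ?thesis using pos Q1[of x] 1 by (simp add: G_def)
    next
      case 2
      have neg: "Q x < 0" using c2 2 Q2[of x] by auto
      have "(E2 has_real_derivative (fm x - a * E2 x)) (at x)" unfolding E2_def by (rule Em_deriv)
      then have "(Q has_real_derivative (fm x - a * E2 x)) (at x)"
        by (rule has_field_derivative_transform_within_open[of _ _ _ "{c1<..<c2}"]) (use 2 Q2 in auto)
      then show ?thesis using neg Q2[of x] 2 by (simp add: G_def)
    next
      case 3
      have pos: "Q x > 0" using c3 3 Q3[of x] by auto
      have "(E3 has_real_derivative (fp x - a * E3 x)) (at x)" unfolding E3_def by (rule Ep_deriv)
      then have "(Q has_real_derivative (fp x - a * E3 x)) (at x)"
        by (rule has_field_derivative_transform_within_open[of _ _ _ "{c2<..<c3}"]) (use 3 Q3 in auto)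
      then show ?thesis using pos Q3[of x] 3 by (simp add: G_def)
    next
      case 4
      have "((\<lambda>_. 0::real) has_real_derivative 0) (at x)" by simp
      then have "(Q has_real_derivative 0) (at x)"
        by (rule has_field_derivative_transform_within_open[of _ _ _ "{c3<..}"]) (use 4 Q4 in auto)
      then show ?thesis using Q4[of x] 4 x by (simp add: G_def)
    qed
  qed
  have int: "(G has_integral (Q v - Q u)) {u..v}" if uv: "s \<le> u" "u \<le> v" "v \<le> 22/3" for u v
  proof (rule fundamental_theorem_of_calculus_interior_strong[of "{c1, c2, c3}"])
    show "finite {c1, c2, c3}" by simp
    show "u \<le> v" by fact
    show "continuous_on {u..v} Q" using cQ by (rule continuous_on_subset) simp
    fix x assume "x \<in> {u<..<v} - {c1, c2, c3}"
    then show "(Q has_vector_derivative G x) (at x)"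
      using der[of x] uv by (auto simp: has_real_derivative_iff_has_vector_derivative)
  qed
  have zero: "\<forall>x\<in>{65/9..22/3}. Q x = 0"
  proof
    fix x :: real assume x: "x \<in> {65/9..22/3}"
    show "Q x = 0"
    proof (cases "x = c3")
      case True then show ?thesis using Q3[of x] c3 c2 by simp
    next
      case False then show ?thesis using Q4[of x] c3 x by simp
    qed
  qed
  show ?thesis using Qs zero sel int by blast
qed



lemma int_diff:
  fixes G :: "real \<Rightarrow> real"
  assumes A: "(G has_integral A) {c..v}" and B: "(G has_integral B) {c..u}" and cu: "c \<le> u" "u \<le> v"
  shows "(G has_integral (A - B)) {u..v}"
proof -
  have ia: "G integrable_on {c..v}" using A by blast
  have iu: "G integrable_on {u..v}" by (rule integrable_subinterval_real[OF ia]) (use cu in auto)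
  have "integral {c..u} G + integral {u..v} G = integral {c..v} G"
    by (rule Henstock_Kurzweil_Integration.integral_combine[OF cu ia])
  then have "integral {u..v} G = A - B" using integral_unique[OF A] integral_unique[OF B] by simp
  then show ?thesis using integrable_integral[OF iu] by simp
qed

lemma fil_cont:
  fixes y g :: "real \<Rightarrow> real" and x0 v :: real
  assumes int: "\<forall>x\<ge>x0. (g has_integral (y x - y x0)) {x0..x}" and v: "x0 \<le> v"
  shows "continuous_on {x0..v} y"
proof -
  have ig: "g integrable_on {x0..v}" using int v by blast
  have c0: "continuous_on {x0..v} (\<lambda>t. integral {x0..t} g)"
    by (rule indefinite_integral_continuous_1[OF ig])
  have c: "continuous_on {x0..v} (\<lambda>t. y x0 + integral {x0..t} g)"
    by (rule continuous_on_add[OF continuous_on_const c0])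
  show ?thesis
  proof (rule continuous_on_eq[OF c])
    fix t assume "t \<in> {x0..v}"
    then have "integral {x0..t} g = y t - y x0" using int by (auto intro: integral_unique)
    then show "y x0 + integral {x0..t} g = y t" by simp
  qed
qed

lemma fil_isol:
  fixes y g :: "real \<Rightarrow> real"
  assumes int: "\<forall>x\<ge>x0. (g has_integral (y x - y x0)) {x0..x}" and uv: "x0 \<le> u" "u \<le> v"
  shows "isol y g u v"
  unfolding isol_def
proof (intro conjI allI impI)
  show "u \<le> v" by fact
  show "continuous_on {u..v} y" using fil_cont[OF int, of v] uv by (auto intro: continuous_on_subset)
  fix s t assume st: "u \<le> s" "s \<le> t" "t \<le> v"
  show "(g has_integral y t - y s) {s..t}"
    using int_diff[of g "y t - y x0" x0 t "y s - y x0" s] int st uv by auto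
qed

lemma fil_fsol:
  fixes y g :: "real \<Rightarrow> real"
  assumes sel: "\<forall>x\<ge>x0. g x \<in> filippov_rhs a x (y x)"
    and int: "\<forall>x\<ge>x0. (g has_integral (y x - y x0)) {x0..x}" and uv: "x0 \<le> u" "u \<le> v"
  shows "fsol a y g u v"
proof -
  have sp: "\<And>x. x \<in> {u..v} \<Longrightarrow> (y x > 0 \<longrightarrow> g x = fp x - a * y x) \<and> (y x < 0 \<longrightarrow> g x = fm x - a * y x) \<and>
         min (fp x) (fm x) - a * y x \<le> g x \<and> g x \<le> max (fp x) (fm x) - a * y x"
    using sel uv by (intro sel_props) auto
  show ?thesis unfolding fsol_def bsol_def using fil_isol[OF int uv] sp by blast
qed

lemma filippov_fsol:
  assumes "filippov_sol a y x0"
  shows "\<exists>g. \<forall>u v. x0 \<le> u \<longrightarrow> u \<le> v \<longrightarrow> fsol a y g u v"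
  using assms unfolding filippov_sol_def by (metis fil_fsol)

lemma mk_filippov:
  fixes y g :: "real \<Rightarrow> real"
  assumes sel: "\<forall>x\<ge>x0. g x \<in> filippov_rhs a x (y x)"
    and int: "\<forall>x\<ge>x0. (g has_integral (y x - y x0)) {x0..x}"
  shows "filippov_sol a y x0"
  unfolding filippov_sol_def
proof (intro exI[of _ g] conjI allI impI)
  show "g x \<in> filippov_rhs a x (y x)" if "x \<ge> x0" for x using sel that by auto
  fix x assume x: "x \<ge> x0"
  show "(g has_integral y x - y x0) {x0..x}" using int x by auto
  have cy: "continuous_on {x0..x} y" by (rule fil_cont[OF int x])
  have "compact (y ` {x0..x})" by (rule compact_continuous_image[OF cy compact_Icc])
  then obtain B where B: "\<forall>t\<in>{x0..x}. \<bar>y t\<bar> \<le> B"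
    using compact_imp_bounded[of "y ` {x0..x}"] unfolding bounded_pos by force
  show "g absolutely_integrable_on {x0..x}"
  proof (rule absolutely_integrable_integrable_bound[where g = "\<lambda>_. \<bar>a\<bar> * B + 3"])
    fix t assume t: "t \<in> {x0..x}"
    have "\<bar>g t\<bar> \<le> \<bar>a\<bar> * \<bar>y t\<bar> + 3" using sel_bound[of "g t" a t "y t"] sel t by auto
    also have "\<dots> \<le> \<bar>a\<bar> * B + 3" using B t by (auto intro: mult_left_mono)
    finally show "norm (g t) \<le> \<bar>a\<bar> * B + 3" by simp
  next
    show "g integrable_on {x0..x}" using int x by blast
  qed auto
qed

lemma glue:
  assumes uw: "u \<le> w"
    and s1: "\<And>x. u \<le> x \<Longrightarrow> x < w \<Longrightarrow> ga x \<in> filippov_rhs a x (ya x)"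
    and i1: "\<And>x. u \<le> x \<Longrightarrow> x \<le> w \<Longrightarrow> (ga has_integral (ya x - ya u)) {u..x}"
    and s2: "\<And>x. w \<le> x \<Longrightarrow> gb x \<in> filippov_rhs a x (yb x)"
    and i2: "\<And>x. w \<le> x \<Longrightarrow> (gb has_integral (yb x - yb w)) {w..x}"
    and e: "ya w = yb w"
  shows "filippov_sol a (\<lambda>x. if x \<le> w then ya x else yb x) u"
proof (rule mk_filippov[where g = "\<lambda>x. if x < w then ga x else gb x"])
  show "\<forall>x\<ge>u. (if x < w then ga x else gb x) \<in> filippov_rhs a x (if x \<le> w then ya x else yb x)"
    using s1 s2 e by (auto simp: not_less)
  show "\<forall>x\<ge>u. ((\<lambda>x. if x < w then ga x else gb x) has_integral
      ((if x \<le> w then ya x else yb x) - (if u \<le> w then ya u else yb u))) {u..x}"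
  proof (intro allI impI)
    fix x assume x: "u \<le> x"
    show "((\<lambda>x. if x < w then ga x else gb x) has_integral
      ((if x \<le> w then ya x else yb x) - (if u \<le> w then ya u else yb u))) {u..x}"
    proof (cases "x \<le> w")
      case True
      have "((\<lambda>x. if x < w then ga x else gb x) has_integral (ya x - ya u)) {u..x}"
        by (rule has_integral_spike_finite[OF _ _ i1[OF x True], of "{w}"]) (use True in auto)
      then show ?thesis using True uw by simp
    next
      case False
      have a1: "((\<lambda>x. if x < w then ga x else gb x) has_integral (ya w - ya u)) {u..w}"
        by (rule has_integral_spike_finite[OF _ _ i1[OF uw order_refl], of "{w}"]) auto
      have a2: "((\<lambda>x. if x < w then ga x else gb x) has_integral (yb x - yb w)) {w..x}"
        by (rule has_integral_spike_finite[OF _ _ i2, of "{w}"]) (use False in auto)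
      have "((\<lambda>x. if x < w then ga x else gb x) has_integral ((ya w - ya u) + (yb x - yb w))) {u..x}"
        by (rule has_integral_combine[OF uw _ a1 a2]) (use False in auto)
      then show ?thesis using False uw e by simp
    qed
  qed
qed

lemma fsol_shift:
  assumes f: "fsol a y g u v"
  shows "fsol a (\<lambda>x. y (x + 4 * real n)) (\<lambda>x. g (x + 4 * real n)) (u - 4 * real n) (v - 4 * real n)"
proof -
  define d where "d = 4 * real n"
  have per: "fp (x + d) = fp x" "fm (x + d) = fm x" for x using fpm_per_nat[of x n] by (auto simp: d_def)
  have iy: "isol y g u v" using f by (simp add: fsol_def bsol_def)
  have isd: "isol (\<lambda>x. y (x + d)) (\<lambda>x. g (x + d)) (u - d) (v - d)"
    unfolding isol_def
  proof (intro conjI allI impI)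
    show "u - d \<le> v - d" using iy by (simp add: isol_def)
    show "continuous_on {u - d..v - d} (\<lambda>x. y (x + d))"
      by (rule continuous_on_compose2[OF isol_cont[OF iy]]) (auto intro: continuous_intros)
    fix s t assume st: "u - d \<le> s" "s \<le> t" "t \<le> v - d"
    have "(g has_integral (y (t + d) - y (s + d))) {s + d..t + d}"
      using iy st unfolding isol_def by auto
    from has_integral_shift_real_ivl[OF this, of d]
    show "((\<lambda>x. g (x + d)) has_integral y (t + d) - y (s + d)) {s..t}" by simp
  qed
  have rest: "\<forall>x\<in>{u - d..v - d}. (min (fp x) (fm x) - a * y (x + d) \<le> g (x + d) \<and> g (x + d) \<le> max (fp x) (fm x) - a * y (x + d))
      \<and> (y (x + d) > 0 \<longrightarrow> g (x + d) = fp x - a * y (x + d)) \<and> (y (x + d) < 0 \<longrightarrow> g (x + d) = fm x - a * y (x + d))"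
  proof
    fix x assume x: "x \<in> {u - d..v - d}"
    then have xd: "x + d \<in> {u..v}" by auto
    have h1: "min (fp (x + d)) (fm (x + d)) - a * y (x + d) \<le> g (x + d) \<and> g (x + d) \<le> max (fp (x + d)) (fm (x + d)) - a * y (x + d)"
      and h2: "y (x + d) > 0 \<longrightarrow> g (x + d) = fp (x + d) - a * y (x + d)"
      and h3: "y (x + d) < 0 \<longrightarrow> g (x + d) = fm (x + d) - a * y (x + d)"
      using f xd unfolding fsol_def bsol_def by blast+
    show "(min (fp x) (fm x) - a * y (x + d) \<le> g (x + d) \<and> g (x + d) \<le> max (fp x) (fm x) - a * y (x + d))
      \<and> (y (x + d) > 0 \<longrightarrow> g (x + d) = fp x - a * y (x + d)) \<and> (y (x + d) < 0 \<longrightarrow> g (x + d) = fm x - a * y (x + d))"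
      using h1 h2 h3 per[of x] by simp
  qed
  show ?thesis unfolding fsol_def bsol_def d_def[symmetric] using isd rest by auto
qed

lemma global_uniq:
  assumes a: "a \<ge> 10"
    and fy: "\<forall>u v. x0 \<le> u \<longrightarrow> u \<le> v \<longrightarrow> fsol a y g u v"
    and fz: "\<forall>u v. x0 \<le> u \<longrightarrow> u \<le> v \<longrightarrow> fsol a z h u v"
    and x0: "x0 \<le> 10/3 + 4 * real n" and y0: "y (10/3 + 4 * real n) = 0" and z0: "z (10/3 + 4 * real n) = 0"
  shows "\<forall>x\<ge>10/3 + 4 * real n. y x = z x"
proof -
  have step: "(\<forall>x\<in>{10/3 + 4 * real k..10/3 + 4 * real (Suc k)}. y x = z x) \<and> y (10/3 + 4 * real (Suc k)) = 0"
    if k: "x0 \<le> 10/3 + 4 * real k" "y (10/3 + 4 * real k) = 0" "z (10/3 + 4 * real k) = 0" for k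
  proof -
    define d where "d = 4 * real k"
    have f1: "fsol a y g (10/3 + d) (22/3 + d)" using fy k by (auto simp: d_def)
    have f2: "fsol a z h (10/3 + d) (22/3 + d)" using fz k by (auto simp: d_def)
    have s1: "fsol a (\<lambda>x. y (x + d)) (\<lambda>x. g (x + d)) (10/3) (22/3)"
      using fsol_shift[OF f1, of k] by (simp add: d_def)
    have s2: "fsol a (\<lambda>x. z (x + d)) (\<lambda>x. h (x + d)) (10/3) (22/3)"
      using fsol_shift[OF f2, of k] by (simp add: d_def)
    have e0: "y (10/3 + d) = 0" "z (10/3 + d) = 0" using k by (auto simp: d_def)
    have U: "\<forall>x\<in>{10/3..22/3}. y (x + d) = z (x + d)"
      by (rule uniq_period[OF a s1 s2]) (use e0 in \<open>auto simp: add.commute\<close>)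
    obtain c3 where c3: "c3 \<le> 65/9" "\<forall>x\<in>{c3..22/3}. y (x + d) = 0"
      using landing[OF a s1] e0 by (auto simp: add.commute)
    have "y (22/3 + d) = 0" using c3 by auto
    moreover have "\<forall>x\<in>{10/3 + d..22/3 + d}. y x = z x"
    proof
      fix x assume "x \<in> {10/3 + d..22/3 + d}"
      then have "x - d \<in> {10/3..22/3}" by auto
      then show "y x = z x" using U[rule_format, of "x - d"] by simp
    qed
    moreover have "10/3 + 4 * real (Suc k) = 22/3 + d" by (simp add: d_def)
    ultimately show ?thesis by (simp add: d_def)
  qed
  have all: "(\<forall>x\<in>{10/3 + 4 * real n..10/3 + 4 * real (n + m)}. y x = z x) \<and> y (10/3 + 4 * real (n + m)) = 0
      \<and> z (10/3 + 4 * real (n + m)) = 0" for m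
  proof (induction m)
    case 0 then show ?case using y0 z0 by auto
  next
    case (Suc m)
    have k: "x0 \<le> 10/3 + 4 * real (n + m)" using x0 by simp
    have sy: "(\<forall>x\<in>{10/3 + 4 * real (n + m)..10/3 + 4 * real (Suc (n + m))}. y x = z x) \<and> y (10/3 + 4 * real (Suc (n + m))) = 0"
      using step[OF k] Suc by blast
    have sz: "z (10/3 + 4 * real (Suc (n + m))) = 0"
      using sy by auto
    show ?case
    proof (intro conjI)
      show "\<forall>x\<in>{10/3 + 4 * real n..10/3 + 4 * real (n + Suc m)}. y x = z x"
      proof
        fix x assume x: "x \<in> {10/3 + 4 * real n..10/3 + 4 * real (n + Suc m)}"
        show "y x = z x"
        proof (cases "x \<le> 10/3 + 4 * real (n + m)")
          case True then show ?thesis using Suc x by auto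
        next
          case False then show ?thesis using sy x by auto
        qed
      qed
      show "y (10/3 + 4 * real (n + Suc m)) = 0" using sy by simp
      show "z (10/3 + 4 * real (n + Suc m)) = 0" using sz by simp
    qed
  qed
  show ?thesis
  proof (intro allI impI)
    fix x assume x: "x \<ge> 10/3 + 4 * real n"
    obtain m :: nat where m: "(x - (10/3 + 4 * real n)) / 4 \<le> real m" using real_arch_simple by blast
    have "x \<le> 10/3 + 4 * real (n + m)" using m by (simp add: field_simps)
    then show "y x = z x" using all[of m] x by auto
  qed
qed



definition rep :: "real \<Rightarrow> real" where "rep x = 10/3 + 4 * frac ((x - 10/3) / 4)"

lemma rep_per: "rep (x + 4) = rep x"
proof -
  have e: "(x + 4 - 10/3) / 4 = (x - 10/3) / 4 + 1" by (simp add: field_simps)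
  show ?thesis unfolding rep_def e frac_1_eq by (rule refl)
qed

lemma rep_range: "10/3 \<le> rep x" "rep x < 22/3"
  unfolding rep_def using frac_ge_0[of "(x - 10/3) / 4"] frac_lt_1[of "(x - 10/3) / 4"] by auto

lemma rep_id: "10/3 \<le> x \<Longrightarrow> x < 22/3 \<Longrightarrow> rep x = x"
proof -
  assume x: "10/3 \<le> x" "x < 22/3"
  have "frac ((x - 10/3) / 4) = (x - 10/3) / 4" by (rule frac_eq[THEN iffD2]) (use x in auto)
  then show ?thesis unfolding rep_def by (simp add: field_simps)
qed

lemma rep_22: "rep (22/3) = 10/3"
  unfolding rep_def by simp

lemma rep_low: "-2/3 \<le> x \<Longrightarrow> x < 10/3 \<Longrightarrow> rep x = x + 4"
  using rep_per[of x] rep_id[of "x + 4"] by simp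

lemma rep_shift: "x = rep x + 4 * of_int \<lfloor>(x - 10/3) / 4\<rfloor>"
  unfolding rep_def frac_def by (simp add: field_simps)

lemma per_nat:
  fixes q :: "real \<Rightarrow> real"
  assumes "\<forall>x. q (x + 4) = q x"
  shows "q (x + 4 * real k) = q x"
proof (induction k arbitrary: x)
  case (Suc k)
  have e: "x + 4 * real (Suc k) = (x + 4 * real k) + 4" by simp
  show ?case unfolding e using Suc assms by simp
qed simp

lemma per_int:
  fixes q G :: "real \<Rightarrow> real"
  assumes pq: "\<forall>x. q (x + 4) = q x" and pG: "\<forall>x. G (x + 4) = G x"
    and H: "\<And>u v. 10/3 \<le> u \<Longrightarrow> u \<le> v \<Longrightarrow> v \<le> 22/3 \<Longrightarrow> (G has_integral (q v - q u)) {u..v}"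
    and uv: "-2/3 \<le> u" "u \<le> v"
  shows "(G has_integral (q v - q u)) {u..v}"
proof -
  have shk: "(G has_integral (q v - q u)) {u..v}"
    if "10/3 + 4 * real k \<le> u" "u \<le> v" "v \<le> 22/3 + 4 * real k" for u v k
  proof -
    define d where "d = 4 * real k"
    have h: "(G has_integral (q (v - d) - q (u - d))) {u - d..v - d}"
      by (rule H) (use that in \<open>auto simp: d_def\<close>)
    have qd: "q (x - d) = q x" and Gd: "G (x - d) = G x" for x
      using per_nat[OF pq, of "x - d" k] per_nat[OF pG, of "x - d" k] by (auto simp: d_def)
    from has_integral_shift_real_ivl[OF h, of "- d"]
    show ?thesis by (simp add: qd Gd)
  qed
  have shm: "(G has_integral (q v - q u)) {u..v}"
    if "-2/3 \<le> u" "u \<le> v" "v \<le> 10/3" for u v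
  proof -
    have h: "(G has_integral (q (v + 4) - q (u + 4))) {u + 4..v + 4}"
      by (rule H) (use that in auto)
    from has_integral_shift_real_ivl[OF h, of 4]
    show ?thesis using pq pG by simp
  qed
  have base: "(G has_integral (q v - q (-2/3))) {-2/3..v}"
    if "-2/3 \<le> v" "v \<le> 10/3 + 4 * real n" for v n
    using that
  proof (induction n arbitrary: v)
    case 0 then show ?case using shm by simp
  next
    case (Suc n)
    show ?case
    proof (cases "v \<le> 10/3 + 4 * real n")
      case True then show ?thesis using Suc by blast
    next
      case False
      have a1: "(G has_integral (q (10/3 + 4 * real n) - q (-2/3))) {-2/3..10/3 + 4 * real n}"
        using Suc.IH[of "10/3 + 4 * real n"] by simp
      have a2: "(G has_integral (q v - q (10/3 + 4 * real n))) {10/3 + 4 * real n..v}"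
        by (rule shk[of n]) (use False Suc.prems in auto)
      have "(G has_integral ((q (10/3 + 4 * real n) - q (-2/3)) + (q v - q (10/3 + 4 * real n)))) {-2/3..v}"
        by (rule has_integral_combine[OF _ _ a1 a2]) (use False in auto)
      then show ?thesis by simp
    qed
  qed
  obtain n :: nat where n: "(v - 10/3) / 4 \<le> real n" using real_arch_simple by blast
  have vn: "v \<le> 10/3 + 4 * real n" using n by (simp add: field_simps)
  have A: "(G has_integral (q v - q (-2/3))) {-2/3..v}" by (rule base[OF _ vn]) (use uv in auto)
  have B: "(G has_integral (q u - q (-2/3))) {-2/3..u}" by (rule base[of u n]) (use uv vn in auto)
  show ?thesis using int_diff[OF A B uv] by simp
qed

theorem theorem2:
  shows "\<exists>a_h > 0. \<forall>a > a_h. \<exists>p :: real \<Rightarrow> real.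
     filippov_sol a p 0 \<and> (\<forall>x\<ge>0. p (x + 4) = p x) \<and> sliding p \<and> p (10/3) = 0 \<and>
     (\<exists>\<nu> > 0. \<forall>xi \<in> {8/3<..<10/3} \<union> {10/3<..<10/3 + \<nu>}.
        (\<exists>y. filippov_sol a y xi \<and> y xi = 0) \<and>
        (\<forall>y. filippov_sol a y xi \<and> y xi = 0 \<longrightarrow> (\<exists>X. \<forall>x\<ge>X. y x = p x)))"
proof (intro exI[of _ 10] conjI allI impI)
  show "(10::real) > 0" by simp
  fix a :: real assume a10: "a > 10"
  then have a: "a \<ge> 10" by simp
  obtain Q0 G0 where Q0s: "Q0 (10/3) = 0" and Q0z: "\<forall>x\<in>{65/9..22/3}. Q0 x = 0"
    and Q0sel: "\<forall>x\<in>{10/3..22/3}. G0 x \<in> filippov_rhs a x (Q0 x)"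
    and Q0int: "\<forall>u v. 10/3 \<le> u \<longrightarrow> u \<le> v \<longrightarrow> v \<le> 22/3 \<longrightarrow> (G0 has_integral (Q0 v - Q0 u)) {u..v}"
    using construct[OF a, of "10/3"] by auto
  define p where "p = (\<lambda>x. Q0 (rep x))"
  define Gp where "Gp = (\<lambda>x. G0 (rep x))"
  have pper: "\<forall>x. p (x + 4) = p x" by (simp add: p_def rep_per)
  have Gper: "\<forall>x. Gp (x + 4) = Gp x" by (simp add: Gp_def rep_per)
  have pQ: "p x = Q0 x" if "10/3 \<le> x" "x \<le> 22/3" for x
  proof (cases "x = 22/3")
    case True
    have "Q0 (22/3) = 0" using Q0z by simp
    then show ?thesis unfolding True p_def rep_22 using Q0s by simp
  next
    case False then show ?thesis using that by (simp add: p_def rep_id)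
  qed
  have H: "(Gp has_integral (p v - p u)) {u..v}" if "10/3 \<le> u" "u \<le> v" "v \<le> 22/3" for u v
  proof -
    have h0: "(G0 has_integral (Q0 v - Q0 u)) {u..v}" using Q0int that by auto
    have "(Gp has_integral (Q0 v - Q0 u)) {u..v}"
      by (rule has_integral_spike_finite[OF _ _ h0, of "{22/3}"]) (use that in \<open>auto simp: Gp_def rep_id\<close>)
    then show ?thesis using pQ that by simp
  qed
  have PI: "(Gp has_integral (p v - p u)) {u..v}" if "-2/3 \<le> u" "u \<le> v" for u v
    by (rule per_int[OF pper Gper H that]) auto
  have psel: "Gp x \<in> filippov_rhs a x (p x)" for x
  proof -
    have "G0 (rep x) \<in> filippov_rhs a (rep x) (Q0 (rep x))" using Q0sel rep_range[of x] by auto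
    moreover have "filippov_rhs a x (p x) = filippov_rhs a (rep x) (p x)"
      using filippov_rhs_per_int[of a "rep x" "\<lfloor>(x - 10/3) / 4\<rfloor>" "p x"] rep_shift[of x] by simp
    ultimately show ?thesis by (simp add: Gp_def p_def)
  qed
  have tail: "\<forall>x\<ge>w. (Gp has_integral (p x - p w)) {w..x}" if "w \<ge> -2/3" for w
    using PI that by auto
  have pfil: "filippov_sol a p 0"
    by (rule mk_filippov[where g = Gp]) (use psel PI in auto)
  have pp4: "\<forall>x\<ge>0. p (x + 4) = p x" using pper by simp
  have p10: "p (10/3) = 0" using pQ[of "10/3"] Q0s by simp
  have p22: "p (22/3) = 0" using pQ[of "22/3"] Q0z by simp
  have sl0: "x \<in> LambdaL \<and> p x = 0" if x: "x \<in> {29/9..33/10::real}" for x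
  proof
    have "8/3 < x \<and> x < 10/3" using x by auto
    then show "x \<in> LambdaL" unfolding LambdaL_def by (intro CollectI exI[of _ "1::nat"]) simp
    have "rep x = x + 4" using x by (intro rep_low) auto
    then show "p x = 0" using Q0z x by (simp add: p_def)
  qed
  have slid: "sliding p"
    unfolding sliding_def
    by (rule exI[of _ "29/9::real"], rule exI[of _ "33/10::real"]) (use sl0 in auto)
  have pf: "\<forall>u v. 0 \<le> u \<longrightarrow> u \<le> v \<longrightarrow> fsol a p Gp u v"
    using fil_fsol[of 0 Gp a p] psel PI by auto
  have conv: "\<exists>\<nu>>0. \<forall>xi\<in>{8/3<..<10/3} \<union> {10/3<..<10/3 + \<nu>}.
          (\<exists>y. filippov_sol a y xi \<and> y xi = 0) \<and>
          (\<forall>y. filippov_sol a y xi \<and> y xi = 0 \<longrightarrow> (\<exists>X. \<forall>x\<ge>X. y x = p x))"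
  proof (intro exI[of _ "1/3"] conjI ballI)
    show "(1/3::real) > 0" by simp
    fix xi :: real assume xi: "xi \<in> {8/3<..<10/3} \<union> {10/3<..<10/3 + 1/3}"
    show "\<exists>y. filippov_sol a y xi \<and> y xi = 0"
    proof (cases "xi < 10/3")
      case True
      have xi': "8/3 < xi" using xi True by auto
      have "filippov_sol a (\<lambda>x. if x \<le> 10/3 then (\<lambda>_. 0) x else p x) xi"
      proof (rule glue[where ga = "\<lambda>_. 0" and gb = Gp])
        show "xi \<le> 10/3" using True by simp
        fix x assume x: "xi \<le> x" "x < 10/3"
        have "cos (pi * x) < -1/2" using Ti2[of x] x xi' by auto
        then show "(0::real) \<in> filippov_rhs a x 0" by (rule sel_slide)
      next
        fix x assume x: "xi \<le> x" "x \<le> 10/3"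
        show "((\<lambda>_. 0::real) has_integral (0 - 0)) {xi..x}" by simp
      next
        fix x :: real assume "10/3 \<le> x"
        then show "Gp x \<in> filippov_rhs a x (p x)" using psel by simp
      next
        fix x :: real assume "10/3 \<le> x"
        then show "(Gp has_integral (p x - p (10/3))) {10/3..x}" using PI by simp
      next
        show "(0::real) = p (10/3)" using p10 by simp
      qed
      then show ?thesis using True by (intro exI[of _ "\<lambda>x. if x \<le> 10/3 then (\<lambda>_. 0) x else p x"]) auto
    next
      case False
      then have xi': "10/3 < xi" "xi < 11/3" using xi by auto
      obtain Q G where Qs: "Q xi = 0" and Qz: "\<forall>x\<in>{65/9..22/3}. Q x = 0"
        and Qsel: "\<forall>x\<in>{xi..22/3}. G x \<in> filippov_rhs a x (Q x)"
        and Qint: "\<forall>u v. xi \<le> u \<longrightarrow> u \<le> v \<longrightarrow> v \<le> 22/3 \<longrightarrow> (G has_integral (Q v - Q u)) {u..v}"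
        using construct[OF a, of xi] xi' by auto
      have "filippov_sol a (\<lambda>x. if x \<le> 22/3 then Q x else p x) xi"
      proof (rule glue[where ga = G and gb = Gp])
        show "xi \<le> 22/3" using xi' by simp
        fix x assume x: "xi \<le> x" "x < 22/3"
        then show "G x \<in> filippov_rhs a x (Q x)" using Qsel by auto
      next
        fix x assume x: "xi \<le> x" "x \<le> 22/3"
        then show "(G has_integral (Q x - Q xi)) {xi..x}" using Qint by auto
      next
        fix x :: real assume "22/3 \<le> x"
        then show "Gp x \<in> filippov_rhs a x (p x)" using psel by simp
      next
        fix x :: real assume "22/3 \<le> x"
        then show "(Gp has_integral (p x - p (22/3))) {22/3..x}" using PI by simp
      next
        show "Q (22/3) = p (22/3)" using p22 Qz by simp
      qed
      then show ?thesis using Qs xi' by (intro exI[of _ "\<lambda>x. if x \<le> 22/3 then Q x else p x"]) auto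
    qed
  next
    fix xi :: real assume xi: "xi \<in> {8/3<..<10/3} \<union> {10/3<..<10/3 + 1/3}"
    show "\<forall>y. filippov_sol a y xi \<and> y xi = 0 \<longrightarrow> (\<exists>X. \<forall>x\<ge>X. y x = p x)"
    proof (intro allI impI, elim conjE)
      fix y assume fy: "filippov_sol a y xi" and y0: "y xi = 0"
      obtain g where fg: "\<forall>u v. xi \<le> u \<longrightarrow> u \<le> v \<longrightarrow> fsol a y g u v"
        using filippov_fsol[OF fy] by blast
      have pf': "\<forall>u v. xi \<le> u \<longrightarrow> u \<le> v \<longrightarrow> fsol a p Gp u v" using pf xi by auto
      show "\<exists>X. \<forall>x\<ge>X. y x = p x"
      proof (cases "xi < 10/3")
        case True
        have sl: "\<forall>x\<in>{xi..10/3}. y x = 0"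
          by (rule sliding_lemma[OF fg[rule_format, of xi "10/3"]]) (use True a y0 Th2 xi in auto)
        have U: "\<forall>x\<ge>10/3 + 4 * real 0. y x = p x"
          by (rule global_uniq[OF a fg pf']) (use True sl p10 in auto)
        show ?thesis by (rule exI[of _ "10/3 + 4 * real 0"]) (use U in blast)
      next
        case False
        then have xi': "10/3 < xi" "xi < 11/3" using xi by auto
        obtain c3 where c3: "c3 \<le> 65/9" "\<forall>x\<in>{c3..22/3}. y x = 0"
          using landing[OF a fg[rule_format, of xi "22/3"] _ _ y0] xi' by auto
        have "y (22/3) = 0" using c3 by auto
        have U: "\<forall>x\<ge>10/3 + 4 * real 1. y x = p x"
          by (rule global_uniq[OF a fg pf']) (use xi' \<open>y (22/3) = 0\<close> p22 in auto)
        show ?thesis by (rule exI[of _ "10/3 + 4 * real 1"]) (use U in blast)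
      qed
    qed
  qed
  show "\<exists>p :: real \<Rightarrow> real.
     filippov_sol a p 0 \<and> (\<forall>x\<ge>0. p (x + 4) = p x) \<and> sliding p \<and> p (10/3) = 0 \<and>
     (\<exists>\<nu> > 0. \<forall>xi \<in> {8/3<..<10/3} \<union> {10/3<..<10/3 + \<nu>}.
        (\<exists>y. filippov_sol a y xi \<and> y xi = 0) \<and>
        (\<forall>y. filippov_sol a y xi \<and> y xi = 0 \<longrightarrow> (\<exists>X. \<forall>x\<ge>X. y x = p x)))"
    by (rule exI[of _ p]) (use pfil pp4 slid p10 conv in blast)
qed


end
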